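(* There is an embedding $\mathcal{B} \hookrightarrow \mathcal{G}$ which, for every $X \subseteq \omega$, restricts to an embedding $\mathcal{B}^X \hookrightarrow \mathcal{G}^{X \oplus \overline{X}}$ (where $\overline{X} = \omega \setminus X$ and $X\oplus \overline X = \{2n : n\in X\}\cup\{2n+1 : n \notin X\}$).
   Context: A partial combinatory algebra (pca) is a set $A$ with a partial binary operation $\cdot$ (application, associating to the left) containing distinct elements $\mathrm{s},\mathrm{k}$ such that for all $a,b,c$: $\mathrm{k}ab$ is defined and equals $a$; $\mathrm{s}ab$ is defined; and $\mathrm{s}abc \simeq (ac)(bc)$ (Kleene equality). An embedding of pcas $\mathcal{A}\hookrightarrow\mathcal{A}'$ is an injective map $f$ such that whenever $a\cdot b$ is defined in $\mathcal{A}$, $f(a)\cdot f(b)$ is defined in $\mathcal{A}'$ and equals $f(a\cdot b)$. Van Oosten's model $\mathcal{B}$ (in the coding used here): the elements are the partial functions $\omega \rightharpoonup \omega$, and for $\varphi,\psi$ the application $\varphi\cdot\psi$ is the partial function $n \mapsto \Phi^{\varphi\oplus\psi}_{\varphi(0)}(n)$, where $\Phi_e$ is the $e$-th Turing functional, $(\varphi\oplus\psi)(2n)\simeq\varphi(n)$, $(\varphi\oplus\psi)(2n+1)\simeq\psi(n)$, and a query to the oracle at a point where it is undefined makes the computation diverge; application is always defined. $\mathcal{B}^X$ is the sub-pca of partial $X$-computable functions. Scott's graph model $\mathcal{G}$: the carrier is $\mathcal{P}(\omega)$, with application $A\cdot B = \{n : \exists u\, (\langle n,u\rangle \in A \wedge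 D_u\subseteq B)\}$, where $\langle\cdot,\cdot\rangle$ is a bijective computable pairing with $\langle 0,0\rangle=0$ and $D_u$ is the finite set with canonical code $u$ (the set $F$ is coded by $\sum_{k\in F}2^k$). For $Y\subseteq\omega$, $\mathcal{G}^Y$ is the least class of sets containing $Y$ and all c.e. sets and closed under application; equivalently the sets enumeration-reducible to $Y$. These are pcas. *)

theory Defs
  imports Main "HOL-Library.Nat_Bijection"
begin

text \<open>Programs of a unary partial-recursive basis with Cantor pairing
  (prod_encode / prod_decode) and an oracle query instruction.\<close>

datatype prog =
    Zero | Succ | Ident | Fst | Snd | Query
  | PairP prog prog | Comp prog prog | Prec prog prog | Mu prog

text \<open>Big-step semantics relative to a partial oracle; a query at a point
  where the oracle is undefined has no derivation, i.e. diverges.\<close>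

inductive ev :: "(nat \<Rightarrow> nat option) \<Rightarrow> prog \<Rightarrow> nat \<Rightarrow> nat \<Rightarrow> bool"
  for orc :: "nat \<Rightarrow> nat option" where
  ev_zero: "ev orc Zero x 0"
| ev_succ: "ev orc Succ x (Suc x)"
| ev_ident: "ev orc Ident x x"
| ev_fst: "ev orc Fst x (fst (prod_decode x))"
| ev_snd: "ev orc Snd x (snd (prod_decode x))"
| ev_query: "orc x = Some v \<Longrightarrow> ev orc Query x v"
| ev_pair: "ev orc f x a \<Longrightarrow> ev orc g x b \<Longrightarrow> ev orc (PairP f g) x (prod_encode (a, b))"
| ev_comp: "ev orc g x y \<Longrightarrow> ev orc f y z \<Longrightarrow> ev orc (Comp f g) x z"
| ev_prec0: "ev orc f y v \<Longrightarrow> ev orc (Prec f g) (prod_encode (0, y)) v"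
| ev_precS: "ev orc (Prec f g) (prod_encode (n, y)) v \<Longrightarrow>
     ev orc g (prod_encode (n, prod_encode (v, y))) w \<Longrightarrow>
     ev orc (Prec f g) (prod_encode (Suc n, y)) w"
| ev_mu: "ev orc f (prod_encode (y, x)) 0 \<Longrightarrow>
     (\<forall>i<y. \<exists>v. v \<noteq> 0 \<and> ev orc f (prod_encode (i, x)) v) \<Longrightarrow>
     ev orc (Mu f) x y"

lemma fst_prod_decode_le: "fst (prod_decode m) \<le> m"
  by (metis le_prod_encode_1 prod.collapse prod_decode_inverse)

lemma snd_prod_decode_le: "snd (prod_decode m) \<le> m"
  by (metis le_prod_encode_2 prod.collapse prod_decode_inverse)

function decode :: "nat \<Rightarrow> prog" where
  "decode e =
    (if e mod 10 = 0 then Zero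
     else if e mod 10 = 1 then Succ
     else if e mod 10 = 2 then Ident
     else if e mod 10 = 3 then Fst
     else if e mod 10 = 4 then Snd
     else if e mod 10 = 5 then Query
     else if e mod 10 = 6 then PairP (decode (fst (prod_decode (e div 10))))
                                     (decode (snd (prod_decode (e div 10))))
     else if e mod 10 = 7 then Comp (decode (fst (prod_decode (e div 10))))
                                    (decode (snd (prod_decode (e div 10))))
     else if e mod 10 = 8 then Prec (decode (fst (prod_decode (e div 10))))
                                    (decode (snd (prod_decode (e div 10))))
     else Mu (decode (e div 10)))"
  by auto
termination
proof (relation "measure id")
  have lt: "e div 10 < e" if "e mod 10 \<noteq> 0" for e :: nat
  proof -
    have "e > 0" using that by (cases e) auto
    thus ?thesis by simp
  qed
  show "wf (measure id)" by simp
  fix e :: nat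
  show "e mod 10 \<noteq> 0 \<Longrightarrow> e mod 10 \<noteq> 1 \<Longrightarrow> e mod 10 \<noteq> 2 \<Longrightarrow> e mod 10 \<noteq> 3 \<Longrightarrow>
        e mod 10 \<noteq> 4 \<Longrightarrow> e mod 10 \<noteq> 5 \<Longrightarrow> e mod 10 = 6 \<Longrightarrow>
        (fst (prod_decode (e div 10)), e) \<in> measure id"
    using lt[of e] fst_prod_decode_le[of "e div 10"] by simp
  show "e mod 10 \<noteq> 0 \<Longrightarrow> e mod 10 \<noteq> 1 \<Longrightarrow> e mod 10 \<noteq> 2 \<Longrightarrow> e mod 10 \<noteq> 3 \<Longrightarrow>
        e mod 10 \<noteq> 4 \<Longrightarrow> e mod 10 \<noteq> 5 \<Longrightarrow> e mod 10 = 6 \<Longrightarrow>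
        (snd (prod_decode (e div 10)), e) \<in> measure id"
    using lt[of e] snd_prod_decode_le[of "e div 10"] by simp
  show "e mod 10 \<noteq> 0 \<Longrightarrow> e mod 10 \<noteq> 1 \<Longrightarrow> e mod 10 \<noteq> 2 \<Longrightarrow> e mod 10 \<noteq> 3 \<Longrightarrow>
        e mod 10 \<noteq> 4 \<Longrightarrow> e mod 10 \<noteq> 5 \<Longrightarrow> e mod 10 \<noteq> 6 \<Longrightarrow> e mod 10 = 7 \<Longrightarrow>
        (fst (prod_decode (e div 10)), e) \<in> measure id"
    using lt[of e] fst_prod_decode_le[of "e div 10"] by simp
  show "e mod 10 \<noteq> 0 \<Longrightarrow> e mod 10 \<noteq> 1 \<Longrightarrow> e mod 10 \<noteq> 2 \<Longrightarrow> e mod 10 \<noteq> 3 \<Longrightarrow>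
        e mod 10 \<noteq> 4 \<Longrightarrow> e mod 10 \<noteq> 5 \<Longrightarrow> e mod 10 \<noteq> 6 \<Longrightarrow> e mod 10 = 7 \<Longrightarrow>
        (snd (prod_decode (e div 10)), e) \<in> measure id"
    using lt[of e] snd_prod_decode_le[of "e div 10"] by simp
  show "e mod 10 \<noteq> 0 \<Longrightarrow> e mod 10 \<noteq> 1 \<Longrightarrow> e mod 10 \<noteq> 2 \<Longrightarrow> e mod 10 \<noteq> 3 \<Longrightarrow>
        e mod 10 \<noteq> 4 \<Longrightarrow> e mod 10 \<noteq> 5 \<Longrightarrow> e mod 10 \<noteq> 6 \<Longrightarrow> e mod 10 \<noteq> 7 \<Longrightarrow>
        e mod 10 = 8 \<Longrightarrow> (fst (prod_decode (e div 10)), e) \<in> measure id"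
    using lt[of e] fst_prod_decode_le[of "e div 10"] by simp
  show "e mod 10 \<noteq> 0 \<Longrightarrow> e mod 10 \<noteq> 1 \<Longrightarrow> e mod 10 \<noteq> 2 \<Longrightarrow> e mod 10 \<noteq> 3 \<Longrightarrow>
        e mod 10 \<noteq> 4 \<Longrightarrow> e mod 10 \<noteq> 5 \<Longrightarrow> e mod 10 \<noteq> 6 \<Longrightarrow> e mod 10 \<noteq> 7 \<Longrightarrow>
        e mod 10 = 8 \<Longrightarrow> (snd (prod_decode (e div 10)), e) \<in> measure id"
    using lt[of e] snd_prod_decode_le[of "e div 10"] by simp
  show "e mod 10 \<noteq> 0 \<Longrightarrow> e mod 10 \<noteq> 1 \<Longrightarrow> e mod 10 \<noteq> 2 \<Longrightarrow> e mod 10 \<noteq> 3 \<Longrightarrow>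
        e mod 10 \<noteq> 4 \<Longrightarrow> e mod 10 \<noteq> 5 \<Longrightarrow> e mod 10 \<noteq> 6 \<Longrightarrow> e mod 10 \<noteq> 7 \<Longrightarrow>
        e mod 10 \<noteq> 8 \<Longrightarrow> (e div 10, e) \<in> measure id"
    using lt[of e] by simp
qed

definition Phi :: "nat \<Rightarrow> (nat \<Rightarrow> nat option) \<Rightarrow> nat \<Rightarrow> nat option" where
  "Phi e orc n = (if \<exists>v. ev orc (decode e) n v then Some (THE v. ev orc (decode e) n v) else None)"

definition pjoin :: "(nat \<Rightarrow> nat option) \<Rightarrow> (nat \<Rightarrow> nat option) \<Rightarrow> nat \<Rightarrow> nat option" where
  "pjoin \<phi> \<psi> m = (if even m then \<phi> (m div 2) else \<psi> (m div 2))"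

definition Bapp :: "(nat \<Rightarrow> nat option) \<Rightarrow> (nat \<Rightarrow> nat option) \<Rightarrow> nat \<Rightarrow> nat option" where
  "Bapp \<phi> \<psi> n = (case \<phi> 0 of None \<Rightarrow> None | Some e \<Rightarrow> Phi e (pjoin \<phi> \<psi>) n)"

definition charfn :: "nat set \<Rightarrow> nat \<Rightarrow> nat option" where
  "charfn X n = Some (if n \<in> X then 1 else 0)"

definition BX :: "nat set \<Rightarrow> (nat \<Rightarrow> nat option) set" where
  "BX X = {\<phi>. \<exists>e. \<phi> = Phi e (charfn X)}"

definition Dset :: "nat \<Rightarrow> nat set" where
  "Dset u = {k. odd (u div 2 ^ k)}"

definition Gapp :: "nat set \<Rightarrow> nat set \<Rightarrow> nat set" where
  "Gapp A B = {n. \<exists>u. prod_encode (n, u) \<in> A \<and> Dset u \<subseteq> B}"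

text \<open>Computably enumerable sets: domains of partial computable functions
  (computations with the nowhere-defined oracle).\<close>
definition ce :: "nat set \<Rightarrow> bool" where
  "ce A \<longleftrightarrow> (\<exists>e. A = {n. Phi e (\<lambda>_. None) n \<noteq> None})"

inductive_set GY :: "nat set \<Rightarrow> nat set set" for Y :: "nat set" where
  GY_base: "Y \<in> GY Y"
| GY_ce: "ce A \<Longrightarrow> A \<in> GY Y"
| GY_app: "A \<in> GY Y \<Longrightarrow> B \<in> GY Y \<Longrightarrow> Gapp A B \<in> GY Y"

definition sjoin :: "nat set \<Rightarrow> nat set \<Rightarrow> nat set" where
  "sjoin X Z = {2 * n | n. n \<in> X} \<union> {2 * n + 1 | n. n \<in> Z}"

end

theory Submission
  imports Defs
begin


declare decode.simps[simp del]


lemma ev_det: "ev orc p x y \<Longrightarrow> ev orc p x y' \<Longrightarrow> y = y'"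
proof (induction arbitrary: y' rule: ev.induct)
  case (ev_zero x) then show ?case by (cases rule: ev.cases) auto
next
  case (ev_succ x) then show ?case by (cases rule: ev.cases) auto
next
  case (ev_ident x) then show ?case by (cases rule: ev.cases) auto
next
  case (ev_fst x) then show ?case by (cases rule: ev.cases) auto
next
  case (ev_snd x) then show ?case by (cases rule: ev.cases) auto
next
  case (ev_query x v) from ev_query.prems ev_query.hyps show ?case by (cases rule: ev.cases) auto
next
  case (ev_pair f x a g b) from ev_pair.prems show ?case by (cases rule: ev.cases) (auto dest: ev_pair.IH)
next
  case (ev_comp g x y f z) from ev_comp.prems show ?case
    by (cases rule: ev.cases) (metis ev_comp.IH)
next
  case (ev_prec0 f y v g) from ev_prec0.prems show ?case
    by (cases rule: ev.cases) (auto dest: ev_prec0.IH)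
next
  case (ev_precS f g n y v w) from ev_precS.prems show ?case
    by (cases rule: ev.cases) (metis ev_precS.IH prod.inject prod_encode_eq nat.inject old.nat.distinct(1))+
next
  case (ev_mu f y x)
  from ev_mu.prems show ?case
  proof (cases rule: ev.cases)
    case mu: ev_mu
    show ?thesis
    proof (rule ccontr)
      assume "y \<noteq> y'"
      then consider "y < y'" | "y' < y" by linarith
      then show False
      proof cases
        case 1
        with mu obtain v where "v \<noteq> 0" "ev orc f (prod_encode (y, x)) v" by blast
        with ev_mu.IH(1) show False by auto
      next
        case 2
        with ev_mu.IH(2) obtain v where "v \<noteq> 0" "\<And>z. ev orc f (prod_encode (y', x)) z \<Longrightarrow> v = z" by blast
        with mu show False by auto
      qed
    qed
  qed
qed

lemma ev_mono: "ev orc p x y \<Longrightarrow> orc \<subseteq>\<^sub>m orc' \<Longrightarrow> ev orc' p x y"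
proof (induction rule: ev.induct)
  case (ev_query x v) then show ?case by (auto intro: ev.intros simp: map_le_def dom_def)
next
  case (ev_mu f y x) then show ?case by (auto intro!: ev.ev_mu)
qed (auto intro: ev.intros)

lemma ev_finite_use: "ev orc p x y \<Longrightarrow> \<exists>D. finite D \<and> (\<forall>orc'. (\<forall>k\<in>D. orc' k = orc k) \<longrightarrow> ev orc' p x y)"
proof (induction rule: ev.induct)
  case (ev_zero x) then show ?case by (metis ev.ev_zero finite.emptyI)
next
  case (ev_succ x) then show ?case by (metis ev.ev_succ finite.emptyI)
next
  case (ev_ident x) then show ?case by (metis ev.ev_ident finite.emptyI)
next
  case (ev_fst x) then show ?case by (metis ev.ev_fst finite.emptyI)
next
  case (ev_snd x) then show ?case by (metis ev.ev_snd finite.emptyI)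
next
  case (ev_query x v) then show ?case by (rule_tac x="{x}" in exI) (auto intro: ev.ev_query)
next
  case (ev_pair f x a g b)
  then obtain D1 D2 where "finite D1" "finite D2" "\<forall>orc'. (\<forall>k\<in>D1. orc' k = orc k) \<longrightarrow> ev orc' f x a"
    "\<forall>orc'. (\<forall>k\<in>D2. orc' k = orc k) \<longrightarrow> ev orc' g x b" by blast
  then show ?case by (rule_tac x="D1 \<union> D2" in exI) (auto intro: ev.ev_pair)
next
  case (ev_comp g x y f z)
  then obtain D1 D2 where "finite D1" "finite D2" "\<forall>orc'. (\<forall>k\<in>D1. orc' k = orc k) \<longrightarrow> ev orc' g x y"
    "\<forall>orc'. (\<forall>k\<in>D2. orc' k = orc k) \<longrightarrow> ev orc' f y z" by blast
  then show ?case by (rule_tac x="D1 \<union> D2" in exI) (auto intro: ev.ev_comp)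
next
  case (ev_prec0 f y v g)
  then show ?case by (meson ev.ev_prec0)
next
  case (ev_precS f g n y v w)
  then obtain D1 D2 where "finite D1" "finite D2" "\<forall>orc'. (\<forall>k\<in>D1. orc' k = orc k) \<longrightarrow> ev orc' (Prec f g) (prod_encode (n, y)) v"
    "\<forall>orc'. (\<forall>k\<in>D2. orc' k = orc k) \<longrightarrow> ev orc' g (prod_encode (n, prod_encode (v, y))) w" by blast
  then show ?case by (rule_tac x="D1 \<union> D2" in exI) (auto intro: ev.ev_precS)
next
  case (ev_mu f y x)
  from ev_mu.IH(1) obtain D0 where D0: "finite D0" "\<forall>orc'. (\<forall>k\<in>D0. orc' k = orc k) \<longrightarrow> ev orc' f (prod_encode (y, x)) 0" by blast
  have "\<forall>i\<in>{..<y}. \<exists>vD. fst vD \<noteq> 0 \<and> finite (snd vD) \<and> (\<forall>orc'. (\<forall>k\<in>snd vD. orc' k = orc k) \<longrightarrow> ev orc' f (prod_encode (i, x)) (fst vD))" (is "\<forall>i\<in>_. \<exists>vD. ?P i vD")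
  proof (intro ballI)
    fix i assume "i \<in> {..<y}"
    then have "i < y" by simp
    from ev_mu.IH(2)[rule_format, OF this] obtain v where "v \<noteq> 0" and
       "\<exists>D. finite D \<and> (\<forall>orc'. (\<forall>k\<in>D. orc' k = orc k) \<longrightarrow> ev orc' f (prod_encode (i, x)) v)"
      by blast
    then obtain D where "v \<noteq> 0" "finite D" "\<forall>orc'. (\<forall>k\<in>D. orc' k = orc k) \<longrightarrow> ev orc' f (prod_encode (i, x)) v"
      by blast
    then show "\<exists>vD. fst vD \<noteq> 0 \<and> finite (snd vD) \<and> (\<forall>orc'. (\<forall>k\<in>snd vD. orc' k = orc k) \<longrightarrow> ev orc' f (prod_encode (i, x)) (fst vD))"
      by (intro exI[of _ "(v, D)"]) simp
  qed
  then have ex: "\<forall>i\<in>{..<y}. \<exists>vD. ?P i vD" .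
  obtain vD where vD: "\<And>i. i < y \<Longrightarrow> fst (vD i) \<noteq> 0 \<and> finite (snd (vD i)) \<and> (\<forall>orc'. (\<forall>k\<in>snd (vD i). orc' k = orc k) \<longrightarrow> ev orc' f (prod_encode (i, x)) (fst (vD i)))"
  proof -
    from bchoice[OF ex] obtain g where g: "\<forall>i\<in>{..<y}. fst (g i) \<noteq> 0 \<and> finite (snd (g i)) \<and> (\<forall>orc'. (\<forall>k\<in>snd (g i). orc' k = orc k) \<longrightarrow> ev orc' f (prod_encode (i, x)) (fst (g i)))" ..
    show ?thesis by (rule that[of g]) (use g in simp)
  qed
  show ?case
  proof (rule exI[of _ "D0 \<union> (\<Union>i<y. snd (vD i))"], intro conjI allI impI)
    show "finite (D0 \<union> (\<Union>i<y. snd (vD i)))" using D0 vD by auto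
    fix orc' assume a: "\<forall>k\<in>D0 \<union> (\<Union>i<y. snd (vD i)). orc' k = orc k"
    show "ev orc' (Mu f) x y"
    proof (rule ev.ev_mu)
      show "ev orc' f (prod_encode (y, x)) 0" using D0 a by auto
      show "\<forall>i<y. \<exists>v. v \<noteq> 0 \<and> ev orc' f (prod_encode (i, x)) v"
      proof (intro allI impI)
        fix i assume "i < y"
        have "\<forall>k\<in>snd (vD i). orc' k = orc k" using a \<open>i < y\<close> by blast
        then show "\<exists>v. v \<noteq> 0 \<and> ev orc' f (prod_encode (i, x)) v"
          using vD[of i] \<open>i < y\<close> by (intro exI[of _ "fst (vD i)"]) blast
      qed
    qed
  qed
qed

lemma the_ev: assumes "ev orc p n y" shows "(THE v. ev orc p n v) = y"
proof (rule the_equality)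
  show "ev orc p n y" by fact
  fix v assume "ev orc p n v"
  then show "v = y" using ev_det assms by blast
qed

lemma Phi_Some: "Phi e orc n = Some y \<longleftrightarrow> ev orc (decode e) n y"
proof
  assume a: "Phi e orc n = Some y"
  then obtain v where "ev orc (decode e) n v" by (auto simp: Phi_def split: if_splits)
  have 1: "Phi e orc n = Some (THE w. ev orc (decode e) n w)" unfolding Phi_def using \<open>ev orc (decode e) n v\<close> by auto
  have 2: "(THE w. ev orc (decode e) n w) = v" by (rule the_ev) fact
  from a 1 2 have "Some v = Some y" by simp
  with \<open>ev orc (decode e) n v\<close> show "ev orc (decode e) n y" by simp
next
  assume "ev orc (decode e) n y"
  then show "Phi e orc n = Some y" by (auto simp: Phi_def the_ev)
qed

lemma Bapp_Some: "Bapp \<phi> \<psi> n = Some y \<longleftrightarrow> (\<exists>e. \<phi> 0 = Some e \<and> ev (pjoin \<phi> \<psi>) (decode e) n y)"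
  unfolding Bapp_def by (auto simp: Phi_Some split: option.splits)

lemma pjoin_mono: "\<phi> \<subseteq>\<^sub>m \<phi>' \<Longrightarrow> \<psi> \<subseteq>\<^sub>m \<psi>' \<Longrightarrow> pjoin \<phi> \<psi> \<subseteq>\<^sub>m pjoin \<phi>' \<psi>'"
  unfolding map_le_def pjoin_def by (auto simp: dom_def)

lemma map_le_SomeD: "f \<subseteq>\<^sub>m g \<Longrightarrow> f x = Some y \<Longrightarrow> g x = Some y"
  unfolding map_le_def dom_def by force

lemma map_le_SomeI: "(\<And>x y. f x = Some y \<Longrightarrow> g x = Some y) \<Longrightarrow> f \<subseteq>\<^sub>m g"
  unfolding map_le_def dom_def by force

lemma Bapp_mono: "\<phi> \<subseteq>\<^sub>m \<phi>' \<Longrightarrow> \<psi> \<subseteq>\<^sub>m \<psi>' \<Longrightarrow> Bapp \<phi> \<psi> \<subseteq>\<^sub>m Bapp \<phi>' \<psi>'"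
  by (rule map_le_SomeI) (auto simp: Bapp_Some dest: map_le_SomeD intro: ev_mono pjoin_mono)

lemma Bapp_cont: "Bapp \<phi> \<psi> x = Some y \<Longrightarrow> \<exists>D1 D2. finite D1 \<and> finite D2 \<and>
   (\<forall>\<phi>' \<psi>'. (\<forall>k\<in>D1. \<phi>' k = \<phi> k) \<longrightarrow> (\<forall>k\<in>D2. \<psi>' k = \<psi> k) \<longrightarrow> Bapp \<phi>' \<psi>' x = Some y)"
proof -
  assume "Bapp \<phi> \<psi> x = Some y"
  then obtain e where e: "\<phi> 0 = Some e" "ev (pjoin \<phi> \<psi>) (decode e) x y" by (auto simp: Bapp_Some)
  from ev_finite_use[OF e(2)] obtain D where D: "finite D" "\<forall>orc'. (\<forall>k\<in>D. orc' k = pjoin \<phi> \<psi> k) \<longrightarrow> ev orc' (decode e) x y" by blast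
  show ?thesis
  proof (intro exI conjI allI impI)
    show "finite (insert 0 ((\<lambda>k. k div 2) ` D))" "finite ((\<lambda>k. k div 2) ` D)" using D by auto
    fix \<phi>' \<psi>' assume a: "\<forall>k\<in>insert 0 ((\<lambda>k. k div 2) ` D). \<phi>' k = \<phi> k" "\<forall>k\<in>(\<lambda>k. k div 2) ` D. \<psi>' k = \<psi> k"
    have "\<forall>k\<in>D. pjoin \<phi>' \<psi>' k = pjoin \<phi> \<psi> k" using a by (auto simp: pjoin_def)
    then have "ev (pjoin \<phi>' \<psi>') (decode e) x y" using D by blast
    then show "Bapp \<phi>' \<psi>' x = Some y" using a e by (auto simp: Bapp_Some)
  qed
qed


lemma pe00: "prod_encode (0, 0) = 0" by (simp add: prod_encode_def)

lemma fst_pd_less: "m \<noteq> 0 \<Longrightarrow> fst (prod_decode m) < m"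
proof -
  assume m0: "m \<noteq> 0"
  obtain a b where m: "m = prod_encode (a, b)" by (metis prod_decode_inverse prod.collapse)
  have "a + b \<noteq> 0" using m m0 pe00 by (metis add_is_0)
  then obtain k where k: "a + b = Suc k" by (cases "a + b") auto
  have "triangle (a + b) > 0" unfolding k by simp
  then have "a < triangle (a + b) + a" by simp
  then show ?thesis using m by (simp only: prod_encode_inverse fst_conv) (simp add: prod_encode_def)
qed

lemma pd_0: "prod_decode 0 = (0, 0)"
proof -
  have "prod_encode (0, 0) = 0" by (simp add: prod_encode_def)
  then show ?thesis by (metis prod_encode_inverse)
qed


lemma pe_eq_0: "prod_encode (a, b) = 0 \<longleftrightarrow> a = 0 \<and> b = 0"
  by (metis pe00 prod_encode_eq prod.inject)

definition tab :: "nat \<Rightarrow> nat \<Rightarrow> nat option" where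
  "tab t x = (if \<exists>v. bit t (prod_encode (prod_encode (x, v), 1))
              then Some (LEAST v. bit t (prod_encode (prod_encode (x, v), 1))) else None)"

lemma tab_Some: "tab t x = Some v \<longleftrightarrow> bit t (prod_encode (prod_encode (x, v), 1)) \<and> (\<forall>w<v. \<not> bit t (prod_encode (prod_encode (x, w), 1)))"
proof
  assume a: "tab t x = Some v"
  then have ex: "\<exists>v. bit t (prod_encode (prod_encode (x, v), 1))" by (auto simp: tab_def split: if_splits)
  with a have v: "v = (LEAST v. bit t (prod_encode (prod_encode (x, v), 1)))" by (auto simp: tab_def)
  show "bit t (prod_encode (prod_encode (x, v), 1)) \<and> (\<forall>w<v. \<not> bit t (prod_encode (prod_encode (x, w), 1)))"
    using ex v by (metis (mono_tags, lifting) LeastI not_less_Least)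
next
  assume a: "bit t (prod_encode (prod_encode (x, v), 1)) \<and> (\<forall>w<v. \<not> bit t (prod_encode (prod_encode (x, w), 1)))"
  then have "(LEAST v. bit t (prod_encode (prod_encode (x, v), 1))) = v"
    by (intro Least_equality) (auto simp: not_less[symmetric])
  then show "tab t x = Some v" using a by (auto simp: tab_def)
qed

function mem :: "nat \<Rightarrow> (nat \<Rightarrow> nat option) \<Rightarrow> bool" where
  "mem m \<chi> = (if snd (prod_decode m) = 1
     then \<chi> (fst (prod_decode (fst (prod_decode m)))) = Some (snd (prod_decode (fst (prod_decode m))))
     else if m = 0 \<or> bit (snd (prod_decode m)) 0 then False
     else mem (fst (prod_decode m)) (Bapp \<chi> (tab (snd (prod_decode m)))))"
  by auto
termination
  by (relation "measure fst") (auto intro: fst_pd_less)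

declare mem.simps[simp del]

lemma mem_0: "\<not> mem 0 \<chi>"
  by (subst mem.simps) (simp add: pd_0)

lemma mem_E: "mem (prod_encode (prod_encode (x, y), 1)) \<chi> \<longleftrightarrow> \<chi> x = Some y"
  by (subst mem.simps) simp

lemma mem_E1: "mem (prod_encode (prod_encode (x, y), Suc 0)) \<chi> \<longleftrightarrow> \<chi> x = Some y"
  using mem_E[of x y \<chi>] by simp

lemma mem_G: "u \<noteq> 1 \<Longrightarrow> mem (prod_encode (n, u)) \<chi> \<longleftrightarrow>
   prod_encode (n, u) \<noteq> 0 \<and> \<not> bit u 0 \<and> mem n (Bapp \<chi> (tab u))"
  by (subst mem.simps) simp

lemma mem_mono: "mem m \<chi> \<Longrightarrow> \<chi> \<subseteq>\<^sub>m \<chi>' \<Longrightarrow> mem m \<chi>'"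
proof (induction m \<chi> arbitrary: \<chi>' rule: mem.induct)
  case (1 m \<chi>)
  show ?case
  proof (cases "snd (prod_decode m) = 1")
    case True
    with "1.prems" show ?thesis by (subst mem.simps) (auto simp: mem.simps[of m] dest: map_le_SomeD)
  next
    case False
    with "1.prems"(1) have h: "\<not> (m = 0 \<or> bit (snd (prod_decode m)) 0)"
       "mem (fst (prod_decode m)) (Bapp \<chi> (tab (snd (prod_decode m))))"
      by (subst (asm) mem.simps; simp split: if_splits)+
    have "Bapp \<chi> (tab (snd (prod_decode m))) \<subseteq>\<^sub>m Bapp \<chi>' (tab (snd (prod_decode m)))"
      using "1.prems"(2) by (intro Bapp_mono) auto
    with "1.IH"[OF False h(1) h(2)] have "mem (fst (prod_decode m)) (Bapp \<chi>' (tab (snd (prod_decode m))))" .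
    with False h(1) show ?thesis by (subst mem.simps) simp
  qed
qed

lemma Bapp_empty: "Bapp (\<lambda>_. None) \<psi> = (\<lambda>_. None)"
  by (auto simp: Bapp_def)

lemma mem_empty: "\<not> mem m (\<lambda>_. None)"
proof (induction m "(\<lambda>_. None) :: nat \<Rightarrow> nat option" rule: mem.induct)
  case (1 m)
  then show ?case by (subst mem.simps) (simp add: Bapp_empty)
qed

lemma mem_cont: "mem m \<chi> \<Longrightarrow> \<exists>D. finite D \<and> mem m (\<chi> |` D)"
proof (induction m \<chi> rule: mem.induct)
  case (1 m \<chi>)
  show ?case
  proof (cases "snd (prod_decode m) = 1")
    case True
    with "1.prems" show ?thesis
      by (intro exI[of _ "{fst (prod_decode (fst (prod_decode m)))}"]) (auto simp: mem.simps[of m])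
  next
    case False
    let ?n = "fst (prod_decode m)" and ?\<rho> = "tab (snd (prod_decode m))"
    from False "1.prems" have h: "\<not> (m = 0 \<or> bit (snd (prod_decode m)) 0)"
       "mem ?n (Bapp \<chi> ?\<rho>)"
      by (subst (asm) mem.simps; simp split: if_splits)+
    from "1.IH"[OF False h(1) h(2)] obtain D where D: "finite D" "mem ?n ((Bapp \<chi> ?\<rho>) |` D)" by blast
    have "\<forall>x\<in>D. \<exists>D1. finite D1 \<and> (\<forall>\<phi>'. (\<forall>k\<in>D1. \<phi>' k = \<chi> k) \<longrightarrow> Bapp \<chi> ?\<rho> x \<noteq> None \<longrightarrow> Bapp \<phi>' ?\<rho> x = Bapp \<chi> ?\<rho> x)"
    proof
      fix x assume "x \<in> D"
      show "\<exists>D1. finite D1 \<and> (\<forall>\<phi>'. (\<forall>k\<in>D1. \<phi>' k = \<chi> k) \<longrightarrow> Bapp \<chi> ?\<rho> x \<noteq> None \<longrightarrow> Bapp \<phi>' ?\<rho> x = Bapp \<chi> ?\<rho> x)"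
      proof (cases "Bapp \<chi> ?\<rho> x")
        case None then show ?thesis by auto
      next
        case (Some y)
        from Bapp_cont[OF this] obtain D1 D2 where "finite D1" "\<forall>\<phi>' \<psi>'. (\<forall>k\<in>D1. \<phi>' k = \<chi> k) \<longrightarrow> (\<forall>k\<in>D2. \<psi>' k = ?\<rho> k) \<longrightarrow> Bapp \<phi>' \<psi>' x = Some y"
          by blast
        then show ?thesis using Some by (intro exI[of _ D1]) auto
      qed
    qed
    then obtain D1 where D1: "\<And>x. x \<in> D \<Longrightarrow> finite (D1 x) \<and> (\<forall>\<phi>'. (\<forall>k\<in>D1 x. \<phi>' k = \<chi> k) \<longrightarrow> Bapp \<chi> ?\<rho> x \<noteq> None \<longrightarrow> Bapp \<phi>' ?\<rho> x = Bapp \<chi> ?\<rho> x)"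
      by metis
    let ?D' = "\<Union>x\<in>D. D1 x"
    have "(Bapp \<chi> ?\<rho>) |` D \<subseteq>\<^sub>m Bapp (\<chi> |` ?D') ?\<rho>"
    proof (rule map_le_SomeI)
      fix x y assume a: "((Bapp \<chi> ?\<rho>) |` D) x = Some y"
      then have xD: "x \<in> D" and b: "Bapp \<chi> ?\<rho> x = Some y" by (auto simp: restrict_map_def split: if_splits)
      have "\<forall>k\<in>D1 x. (\<chi> |` ?D') k = \<chi> k" using xD by (auto simp: restrict_map_def)
      with D1[OF xD] b show "Bapp (\<chi> |` ?D') ?\<rho> x = Some y" by auto
    qed
    with D(2) have "mem ?n (Bapp (\<chi> |` ?D') ?\<rho>)" by (rule mem_mono)
    then have "mem m (\<chi> |` ?D')" using False h(1) by (subst mem.simps) simp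
    moreover have "finite ?D'" using D(1) D1 by auto
    ultimately show ?thesis by blast
  qed
qed

lemma set_code: "finite S \<Longrightarrow> \<exists>u::nat. \<forall>k. bit u k \<longleftrightarrow> k \<in> S"
proof (induction S rule: finite_induct)
  case empty then show ?case by (intro exI[of _ 0]) simp
next
  case (insert k S)
  from insert.IH obtain u :: nat where u: "\<forall>j. bit u j \<longleftrightarrow> j \<in> S" by blast
  have dis: "\<And>n. \<not> bit u n \<or> \<not> bit ((2::nat) ^ k) n"
  proof -
    fix n
    show "\<not> bit u n \<or> \<not> bit ((2::nat) ^ k) n"
    proof (cases "n = k")
      case True then show ?thesis using u insert(2) by simp
    next
      case False then show ?thesis by (simp add: bit_exp_iff)
    qed
  qed
  have "\<forall>j. bit (u + 2 ^ k) j \<longleftrightarrow> j \<in> insert k S"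
  proof
    fix j
    have "bit (u + 2 ^ k) j \<longleftrightarrow> bit u j \<or> bit ((2::nat) ^ k) j"
      by (rule bit_disjunctive_add_iff) (rule dis)
    then show "bit (u + 2 ^ k) j \<longleftrightarrow> j \<in> insert k S" using u by (auto simp: bit_exp_iff)
  qed
  then show ?case by blast
qed

lemma Dset_bit: "k \<in> Dset u \<longleftrightarrow> bit u k"
  by (simp add: Dset_def bit_iff_odd)

lemma tab_exists: "finite (dom \<sigma>) \<Longrightarrow> \<exists>t. tab t = \<sigma> \<and> (\<forall>k. bit t k \<longrightarrow> (\<exists>x y. k = prod_encode (prod_encode (x, y), 1) \<and> \<sigma> x = Some y))"
proof -
  assume fin: "finite (dom \<sigma>)"
  define S where "S = (\<lambda>x. prod_encode (prod_encode (x, the (\<sigma> x)), 1)) ` dom \<sigma>"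
  have "finite S" using fin by (simp add: S_def)
  from set_code[OF this] obtain t :: nat where t: "\<forall>k. bit t k \<longleftrightarrow> k \<in> S" by blast
  have memS: "k \<in> S \<longleftrightarrow> (\<exists>x y. k = prod_encode (prod_encode (x, y), 1) \<and> \<sigma> x = Some y)" for k
  proof
    assume "k \<in> S"
    then obtain x where "x \<in> dom \<sigma>" "k = prod_encode (prod_encode (x, the (\<sigma> x)), 1)" by (auto simp: S_def)
    then show "\<exists>x y. k = prod_encode (prod_encode (x, y), 1) \<and> \<sigma> x = Some y" by (intro exI[of _ x] exI[of _ "the (\<sigma> x)"]) auto
  next
    assume "\<exists>x y. k = prod_encode (prod_encode (x, y), 1) \<and> \<sigma> x = Some y"
    then obtain x y where "k = prod_encode (prod_encode (x, y), 1)" "\<sigma> x = Some y" by blast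
    then show "k \<in> S" unfolding S_def by (intro image_eqI[of _ _ x]) auto
  qed
  have bt: "bit t (prod_encode (prod_encode (x, v), 1)) \<longleftrightarrow> \<sigma> x = Some v" for x v
    using t memS by simp
  have "tab t x = \<sigma> x" for x
  proof (cases "\<sigma> x")
    case None then show ?thesis using bt by (simp add: tab_def)
  next
    case (Some v) then show ?thesis using bt by (simp add: tab_Some)
  qed
  moreover have "\<forall>k. bit t k \<longrightarrow> (\<exists>x y. k = prod_encode (prod_encode (x, y), 1) \<and> \<sigma> x = Some y)"
    using t memS by blast
  ultimately show ?thesis by (intro exI[of _ t]) auto
qed

definition Femb :: "(nat \<Rightarrow> nat option) \<Rightarrow> nat set" where
  "Femb \<phi> = {m. mem m \<phi>}"

lemma Femb_inj: "inj Femb"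
proof (rule injI)
  fix \<phi> \<psi> assume a: "Femb \<phi> = Femb \<psi>"
  have "\<phi> x = Some y \<longleftrightarrow> \<psi> x = Some y" for x y
    using a mem_E[of x y \<phi>] mem_E[of x y \<psi>] unfolding Femb_def by blast
  then show "\<phi> = \<psi>" by (metis option.exhaust ext)
qed

lemma pe1_ne0: "prod_encode (a, 1) \<noteq> 0"
  by (simp add: pe_eq_0)

lemma Femb_hom: "Femb (Bapp \<phi> \<psi>) = Gapp (Femb \<phi>) (Femb \<psi>)"
proof (rule set_eqI)
  fix n
  show "n \<in> Femb (Bapp \<phi> \<psi>) \<longleftrightarrow> n \<in> Gapp (Femb \<phi>) (Femb \<psi>)"
  proof
    assume "n \<in> Femb (Bapp \<phi> \<psi>)"
    then have mn: "mem n (Bapp \<phi> \<psi>)" by (simp add: Femb_def)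
    from mem_cont[OF this] obtain D where D: "finite D" "mem n ((Bapp \<phi> \<psi>) |` D)" by blast
    have "\<forall>x\<in>D. \<exists>D2. finite D2 \<and> (\<forall>\<psi>'. (\<forall>k\<in>D2. \<psi>' k = \<psi> k) \<longrightarrow> Bapp \<phi> \<psi> x \<noteq> None \<longrightarrow> Bapp \<phi> \<psi>' x = Bapp \<phi> \<psi> x)"
    proof
      fix x assume "x \<in> D"
      show "\<exists>D2. finite D2 \<and> (\<forall>\<psi>'. (\<forall>k\<in>D2. \<psi>' k = \<psi> k) \<longrightarrow> Bapp \<phi> \<psi> x \<noteq> None \<longrightarrow> Bapp \<phi> \<psi>' x = Bapp \<phi> \<psi> x)"
      proof (cases "Bapp \<phi> \<psi> x")
        case None then show ?thesis by auto
      next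
        case (Some y)
        from Bapp_cont[OF this] obtain D1 D2 where "finite D2" "\<forall>\<phi>' \<psi>'. (\<forall>k\<in>D1. \<phi>' k = \<phi> k) \<longrightarrow> (\<forall>k\<in>D2. \<psi>' k = \<psi> k) \<longrightarrow> Bapp \<phi>' \<psi>' x = Some y"
          by blast
        then show ?thesis using Some by (intro exI[of _ D2]) auto
      qed
    qed
    then obtain D2 where D2: "\<And>x. x \<in> D \<Longrightarrow> finite (D2 x) \<and> (\<forall>\<psi>'. (\<forall>k\<in>D2 x. \<psi>' k = \<psi> k) \<longrightarrow> Bapp \<phi> \<psi> x \<noteq> None \<longrightarrow> Bapp \<phi> \<psi>' x = Bapp \<phi> \<psi> x)"
      by metis
    let ?D' = "\<Union>x\<in>D. D2 x"
    have "finite ?D'" using D(1) D2 by auto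
    then have "finite (dom (\<psi> |` ?D'))" by (simp add: finite_subset)
    from tab_exists[OF this] obtain t where t: "tab t = \<psi> |` ?D'"
      "\<forall>k. bit t k \<longrightarrow> (\<exists>x y. k = prod_encode (prod_encode (x, y), 1) \<and> (\<psi> |` ?D') x = Some y)" by blast
    have "(Bapp \<phi> \<psi>) |` D \<subseteq>\<^sub>m Bapp \<phi> (tab t)"
    proof (rule map_le_SomeI)
      fix x y assume a: "((Bapp \<phi> \<psi>) |` D) x = Some y"
      then have xD: "x \<in> D" and b: "Bapp \<phi> \<psi> x = Some y" by (auto simp: restrict_map_def split: if_splits)
      have "\<forall>k\<in>D2 x. tab t k = \<psi> k" using xD t(1) by (auto simp: restrict_map_def)
      with D2[OF xD] b show "Bapp \<phi> (tab t) x = Some y" by auto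
    qed
    with D(2) have m1: "mem n (Bapp \<phi> (tab t))" by (rule mem_mono)
    have n0: "n \<noteq> 0" using mn mem_0 by metis
    have t0: "\<not> bit t 0" using t(2) pe1_ne0 by metis
    have t1: "t \<noteq> 1" using t0 by (auto simp: bit_0)
    have "mem (prod_encode (n, t)) \<phi>" using mem_G[OF t1] m1 n0 t0 by (simp add: pe_eq_0)
    moreover have "Dset t \<subseteq> Femb \<psi>"
    proof
      fix k assume "k \<in> Dset t"
      then have "bit t k" by (simp add: Dset_bit)
      with t(2) obtain x y where "k = prod_encode (prod_encode (x, y), 1)" "\<psi> x = Some y"
        by (auto simp: restrict_map_def split: if_splits)
      then show "k \<in> Femb \<psi>" using mem_E[of x y \<psi>] by (simp add: Femb_def)
    qed
    ultimately show "n \<in> Gapp (Femb \<phi>) (Femb \<psi>)" unfolding Gapp_def Femb_def by blast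
  next
    assume "n \<in> Gapp (Femb \<phi>) (Femb \<psi>)"
    then obtain u where u: "mem (prod_encode (n, u)) \<phi>" "Dset u \<subseteq> Femb \<psi>"
      unfolding Gapp_def Femb_def by blast
    have "\<not> bit u 0" using u(2) mem_0 by (auto simp: Dset_bit Femb_def)
    then have u1: "u \<noteq> 1" by (auto simp: bit_0)
    with u(1) have m1: "mem n (Bapp \<phi> (tab u))" by (simp add: mem_G)
    have "tab u \<subseteq>\<^sub>m \<psi>"
    proof (rule map_le_SomeI)
      fix x v assume "tab u x = Some v"
      then have "bit u (prod_encode (prod_encode (x, v), 1))" by (simp add: tab_Some)
      with u(2) have "mem (prod_encode (prod_encode (x, v), 1)) \<psi>" by (auto simp: Dset_bit Femb_def)
      then show "\<psi> x = Some v" by (simp add: mem_E mem_E1)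
    qed
    then have "Bapp \<phi> (tab u) \<subseteq>\<^sub>m Bapp \<phi> \<psi>" by (intro Bapp_mono) auto
    with m1 have "mem n (Bapp \<phi> \<psi>)" by (rule mem_mono)
    then show "n \<in> Femb (Bapp \<phi> \<psi>)" by (simp add: Femb_def)
  qed
qed


lemma ev_Zero: "ev orc Zero x y \<longleftrightarrow> y = 0"
  by (auto elim: ev.cases intro: ev.ev_zero)
lemma ev_Succ: "ev orc Succ x y \<longleftrightarrow> y = Suc x"
  by (auto elim: ev.cases intro: ev.ev_succ)
lemma ev_Ident: "ev orc Ident x y \<longleftrightarrow> y = x"
  by (auto elim: ev.cases intro: ev.ev_ident)
lemma ev_Fst: "ev orc Fst x y \<longleftrightarrow> y = fst (prod_decode x)"
  by (auto elim: ev.cases intro: ev.ev_fst)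
lemma ev_Snd: "ev orc Snd x y \<longleftrightarrow> y = snd (prod_decode x)"
  by (auto elim: ev.cases intro: ev.ev_snd)
lemma ev_Comp: "ev orc (Comp f g) x z \<longleftrightarrow> (\<exists>y. ev orc g x y \<and> ev orc f y z)"
  by (auto elim: ev.cases intro: ev.ev_comp)
lemma ev_PairP: "ev orc (PairP f g) x z \<longleftrightarrow> (\<exists>a b. z = prod_encode (a, b) \<and> ev orc f x a \<and> ev orc g x b)"
  by (auto elim: ev.cases intro: ev.ev_pair)
lemma ev_Prec0: "ev orc (Prec f g) (prod_encode (0, y)) v \<longleftrightarrow> ev orc f y v"
  by (auto elim: ev.cases intro: ev.ev_prec0)
lemma ev_PrecS: "ev orc (Prec f g) (prod_encode (Suc n, y)) w \<longleftrightarrow>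
   (\<exists>v. ev orc (Prec f g) (prod_encode (n, y)) v \<and> ev orc g (prod_encode (n, prod_encode (v, y))) w)"
proof
  assume "ev orc (Prec f g) (prod_encode (Suc n, y)) w"
  then show "\<exists>v. ev orc (Prec f g) (prod_encode (n, y)) v \<and> ev orc g (prod_encode (n, prod_encode (v, y))) w"
  proof (cases rule: ev.cases)
    case (ev_prec0 y')
    then show ?thesis by simp
  next
    case (ev_precS n' y' v)
    then show ?thesis by auto
  qed
qed (auto intro: ev.ev_precS)
lemma ev_Mu: "ev orc (Mu f) x y \<longleftrightarrow> ev orc f (prod_encode (y, x)) 0 \<and> (\<forall>i<y. \<exists>v. v \<noteq> 0 \<and> ev orc f (prod_encode (i, x)) v)"
  by (auto elim: ev.cases intro: ev.ev_mu)

definition computes :: "prog \<Rightarrow> (nat \<Rightarrow> nat) \<Rightarrow> bool" where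
  "computes p F \<longleftrightarrow> (\<forall>orc x y. ev orc p x y \<longleftrightarrow> y = F x)"

definition cfun :: "(nat \<Rightarrow> nat) \<Rightarrow> bool" where
  "cfun F \<longleftrightarrow> (\<exists>p. computes p F)"

lemma cf_id: "cfun (\<lambda>x. x)"
  unfolding cfun_def computes_def by (rule exI[of _ Ident]) (simp add: ev_Ident)

lemma cf_zero: "cfun (\<lambda>x. 0)"
  unfolding cfun_def computes_def by (rule exI[of _ Zero]) (simp add: ev_Zero)

lemma cf_comp: "cfun F \<Longrightarrow> cfun G \<Longrightarrow> cfun (\<lambda>x. F (G x))"
  unfolding cfun_def computes_def
proof (elim exE)
  fix pf pg assume f: "\<forall>orc x y. ev orc pf x y = (y = F x)" and g: "\<forall>orc x y. ev orc pg x y = (y = G x)"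
  show "\<exists>p. \<forall>orc x y. ev orc p x y = (y = F (G x))"
    by (rule exI[of _ "Comp pf pg"]) (simp add: ev_Comp f g)
qed

lemma cf_Suc: "cfun G \<Longrightarrow> cfun (\<lambda>x. Suc (G x))"
proof -
  have "cfun Suc" unfolding cfun_def computes_def by (rule exI[of _ Succ]) (simp add: ev_Succ)
  then show "cfun G \<Longrightarrow> cfun (\<lambda>x. Suc (G x))" by (rule cf_comp)
qed

lemma cf_fst: "cfun G \<Longrightarrow> cfun (\<lambda>x. fst (prod_decode (G x)))"
proof -
  have "cfun (\<lambda>x. fst (prod_decode x))" unfolding cfun_def computes_def by (rule exI[of _ Fst]) (simp add: ev_Fst)
  then show "cfun G \<Longrightarrow> cfun (\<lambda>x. fst (prod_decode (G x)))" by (rule cf_comp)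
qed

lemma cf_snd: "cfun G \<Longrightarrow> cfun (\<lambda>x. snd (prod_decode (G x)))"
proof -
  have "cfun (\<lambda>x. snd (prod_decode x))" unfolding cfun_def computes_def by (rule exI[of _ Snd]) (simp add: ev_Snd)
  then show "cfun G \<Longrightarrow> cfun (\<lambda>x. snd (prod_decode (G x)))" by (rule cf_comp)
qed

lemma cf_pair: "cfun G \<Longrightarrow> cfun H \<Longrightarrow> cfun (\<lambda>x. prod_encode (G x, H x))"
  unfolding cfun_def computes_def
proof (elim exE)
  fix pf pg assume f: "\<forall>orc x y. ev orc pf x y = (y = G x)" and g: "\<forall>orc x y. ev orc pg x y = (y = H x)"
  show "\<exists>p. \<forall>orc x y. ev orc p x y = (y = prod_encode (G x, H x))"
    by (rule exI[of _ "PairP pf pg"]) (simp add: ev_PairP f g)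
qed

lemma cf_const: "cfun (\<lambda>x. c)"
proof (induction c)
  case 0 show ?case by (rule cf_zero)
next
  case (Suc c) then show ?case by (rule cf_Suc)
qed

fun precf :: "(nat \<Rightarrow> nat) \<Rightarrow> (nat \<Rightarrow> nat) \<Rightarrow> nat \<Rightarrow> nat \<Rightarrow> nat" where
  "precf F G 0 y = F y"
| "precf F G (Suc n) y = G (prod_encode (n, prod_encode (precf F G n y, y)))"

lemma computes_prec: "computes pf F \<Longrightarrow> computes pg G \<Longrightarrow>
  computes (Prec pf pg) (\<lambda>z. precf F G (fst (prod_decode z)) (snd (prod_decode z)))"
  unfolding computes_def
proof (intro allI)
  fix orc z v
  assume f: "\<forall>orc x y. ev orc pf x y = (y = F x)" and g: "\<forall>orc x y. ev orc pg x y = (y = G x)"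
  obtain n y where z: "z = prod_encode (n, y)" by (metis prod_decode_inverse prod.collapse)
  have "ev orc (Prec pf pg) (prod_encode (n, y)) v \<longleftrightarrow> v = precf F G n y" for v
  proof (induction n arbitrary: v)
    case 0 then show ?case by (simp add: ev_Prec0 f)
  next
    case (Suc n) then show ?case by (simp add: ev_PrecS g)
  qed
  then show "ev orc (Prec pf pg) z v = (v = precf F G (fst (prod_decode z)) (snd (prod_decode z)))"
    by (simp add: z)
qed

lemma cf_prec2: "cfun F \<Longrightarrow> cfun G \<Longrightarrow> cfun (\<lambda>z. precf F G (fst (prod_decode z)) (snd (prod_decode z)))"
  unfolding cfun_def by (elim exE) (rule exI, erule (1) computes_prec)

lemma cf_prec: "cfun F \<Longrightarrow> cfun G \<Longrightarrow> cfun N \<Longrightarrow> cfun Y \<Longrightarrow> cfun (\<lambda>x. precf F G (N x) (Y x))"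
proof -
  assume "cfun F" "cfun G" "cfun N" "cfun Y"
  have "cfun (\<lambda>x. (\<lambda>z. precf F G (fst (prod_decode z)) (snd (prod_decode z))) (prod_encode (N x, Y x)))"
    by (rule cf_comp[OF cf_prec2[OF \<open>cfun F\<close> \<open>cfun G\<close>] cf_pair[OF \<open>cfun N\<close> \<open>cfun Y\<close>]])
  then show ?thesis by simp
qed

lemma computes_mu: "computes pf F \<Longrightarrow> (\<forall>x. \<exists>y. F (prod_encode (y, x)) = 0) \<Longrightarrow>
  computes (Mu pf) (\<lambda>x. LEAST y. F (prod_encode (y, x)) = 0)"
  unfolding computes_def
proof (intro allI)
  fix orc x y
  assume f: "\<forall>orc x y. ev orc pf x y = (y = F x)" and ex: "\<forall>x. \<exists>y. F (prod_encode (y, x)) = 0"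
  have "ev orc (Mu pf) x y \<longleftrightarrow> F (prod_encode (y, x)) = 0 \<and> (\<forall>i<y. F (prod_encode (i, x)) \<noteq> 0)"
    by (auto simp: ev_Mu f)
  also have "\<dots> \<longleftrightarrow> y = (LEAST y. F (prod_encode (y, x)) = 0)"
  proof
    assume "F (prod_encode (y, x)) = 0 \<and> (\<forall>i<y. F (prod_encode (i, x)) \<noteq> 0)"
    then show "y = (LEAST y. F (prod_encode (y, x)) = 0)"
      by (intro Least_equality[symmetric]) (auto simp: not_less[symmetric])
  next
    assume y: "y = (LEAST y. F (prod_encode (y, x)) = 0)"
    from ex obtain y0 where "F (prod_encode (y0, x)) = 0" by blast
    then show "F (prod_encode (y, x)) = 0 \<and> (\<forall>i<y. F (prod_encode (i, x)) \<noteq> 0)"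
      unfolding y by (metis (mono_tags, lifting) LeastI not_less_Least)
  qed
  finally show "ev orc (Mu pf) x y = (y = (LEAST y. F (prod_encode (y, x)) = 0))" .
qed

lemma cf_mu: "cfun F \<Longrightarrow> (\<forall>x. \<exists>y. F (prod_encode (y, x)) = 0) \<Longrightarrow> cfun (\<lambda>x. LEAST y. F (prod_encode (y, x)) = 0)"
  unfolding cfun_def by (elim exE) (rule exI, erule (1) computes_mu)

lemma cf_bin: "cfun (\<lambda>z. H (fst (prod_decode z)) (snd (prod_decode z))) \<Longrightarrow> cfun A \<Longrightarrow> cfun B \<Longrightarrow> cfun (\<lambda>x. H (A x) (B x))"
proof -
  assume "cfun (\<lambda>z. H (fst (prod_decode z)) (snd (prod_decode z)))" "cfun A" "cfun B"
  then have "cfun (\<lambda>x. (\<lambda>z. H (fst (prod_decode z)) (snd (prod_decode z))) (prod_encode (A x, B x)))"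
    by (intro cf_comp[of "\<lambda>z. H (fst (prod_decode z)) (snd (prod_decode z))" "\<lambda>x. prod_encode (A x, B x)"] cf_pair)
  then show ?thesis by simp
qed

lemma precf_add: "precf (\<lambda>y. y) (\<lambda>w. Suc (fst (prod_decode (snd (prod_decode w))))) n y = n + y"
  by (induction n) auto

lemma cf_add: "cfun A \<Longrightarrow> cfun B \<Longrightarrow> cfun (\<lambda>x. A x + B x)"
proof -
  have "cfun (\<lambda>x. precf (\<lambda>y. y) (\<lambda>w. Suc (fst (prod_decode (snd (prod_decode w))))) (A x) (B x))"
    if "cfun A" "cfun B" using that by (intro cf_prec cf_id cf_Suc cf_fst cf_snd)
  then show "cfun A \<Longrightarrow> cfun B \<Longrightarrow> cfun (\<lambda>x. A x + B x)" unfolding precf_add prod_encode_inverse fst_conv snd_conv .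
qed

lemma precf_mult: "precf (\<lambda>y. 0) (\<lambda>w. fst (prod_decode (snd (prod_decode w))) + snd (prod_decode (snd (prod_decode w)))) n y = n * y"
  by (induction n) auto

lemma cf_mult: "cfun A \<Longrightarrow> cfun B \<Longrightarrow> cfun (\<lambda>x. A x * B x)"
proof -
  have "cfun (\<lambda>x. precf (\<lambda>y. 0) (\<lambda>w. fst (prod_decode (snd (prod_decode w))) + snd (prod_decode (snd (prod_decode w)))) (A x) (B x))"
    if "cfun A" "cfun B" using that by (intro cf_prec cf_const cf_add cf_id cf_fst cf_snd)
  then show "cfun A \<Longrightarrow> cfun B \<Longrightarrow> cfun (\<lambda>x. A x * B x)" unfolding precf_mult prod_encode_inverse fst_conv snd_conv .
qed

lemma precf_pred: "precf (\<lambda>y. 0) (\<lambda>w. fst (prod_decode w)) n y = n - 1"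
  by (induction n) auto

lemma cf_pred: "cfun A \<Longrightarrow> cfun (\<lambda>x. A x - 1)"
proof -
  have "cfun (\<lambda>x. precf (\<lambda>y. 0) (\<lambda>w. fst (prod_decode w)) (A x) 0)"
    if "cfun A" using that by (intro cf_prec cf_const cf_fst cf_id)
  then show "cfun A \<Longrightarrow> cfun (\<lambda>x. A x - 1)" unfolding precf_pred prod_encode_inverse fst_conv snd_conv .
qed

lemma precf_sub: "precf (\<lambda>y. y) (\<lambda>w. fst (prod_decode (snd (prod_decode w))) - 1) n y = y - n"
  by (induction n) auto

lemma cf_sub: "cfun A \<Longrightarrow> cfun B \<Longrightarrow> cfun (\<lambda>x. A x - B x)"
proof -
  have "cfun (\<lambda>x. precf (\<lambda>y. y) (\<lambda>w. fst (prod_decode (snd (prod_decode w))) - 1) (B x) (A x))"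
    if "cfun A" "cfun B" using that by (intro cf_prec cf_id cf_pred cf_fst cf_snd)
  then show "cfun A \<Longrightarrow> cfun B \<Longrightarrow> cfun (\<lambda>x. A x - B x)" unfolding precf_sub prod_encode_inverse fst_conv snd_conv .
qed

lemma precf_cond: "precf (\<lambda>y. fst (prod_decode y)) (\<lambda>w. snd (prod_decode (snd (prod_decode (snd (prod_decode w)))))) n y
   = (if n = 0 then fst (prod_decode y) else snd (prod_decode y))"
  by (induction n) auto

lemma cf_cond: "cfun C \<Longrightarrow> cfun A \<Longrightarrow> cfun B \<Longrightarrow> cfun (\<lambda>x. if C x = 0 then A x else B x)"
proof -
  have "cfun (\<lambda>x. precf (\<lambda>y. fst (prod_decode y)) (\<lambda>w. snd (prod_decode (snd (prod_decode (snd (prod_decode w)))))) (C x) (prod_encode (A x, B x)))"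
    if "cfun C" "cfun A" "cfun B" using that by (intro cf_prec cf_id cf_pair cf_fst cf_snd)
  then show "cfun C \<Longrightarrow> cfun A \<Longrightarrow> cfun B \<Longrightarrow> cfun (\<lambda>x. if C x = 0 then A x else B x)" unfolding precf_cond prod_encode_inverse fst_conv snd_conv .
qed

definition cpred :: "(nat \<Rightarrow> bool) \<Rightarrow> bool" where
  "cpred P \<longleftrightarrow> cfun (\<lambda>x. if P x then 0 else 1)"

lemma cfun_cong: "cfun F \<Longrightarrow> (\<And>x. F x = G x) \<Longrightarrow> cfun G"
proof -
  assume "cfun F" "\<And>x. F x = G x"
  then have "F = G" by (intro ext)
  with \<open>cfun F\<close> show ?thesis by simp
qed

lemma cpred_cong: "cpred P \<Longrightarrow> (\<And>x. P x \<longleftrightarrow> Q x) \<Longrightarrow> cpred Q"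
proof -
  assume "cpred P" "\<And>x. P x \<longleftrightarrow> Q x"
  then have "P = Q" by (intro ext)
  with \<open>cpred P\<close> show ?thesis by simp
qed

lemma cf_if: "cpred P \<Longrightarrow> cfun A \<Longrightarrow> cfun B \<Longrightarrow> cfun (\<lambda>x. if P x then A x else B x)"
proof -
  assume p: "cpred P" and "cfun A" "cfun B"
  have "cfun (\<lambda>x. if (if P x then 0 else 1) = (0::nat) then A x else B x)"
    by (rule cf_cond[OF p[unfolded cpred_def] \<open>cfun A\<close> \<open>cfun B\<close>])
  then show ?thesis by (rule cfun_cong) simp
qed

lemma cp_const: "cpred (\<lambda>x. c)"
  unfolding cpred_def by (rule cf_const)

lemma cp_eq: "cfun A \<Longrightarrow> cfun B \<Longrightarrow> cpred (\<lambda>x. A x = B x)"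
proof -
  assume "cfun A" "cfun B"
  then have "cfun (\<lambda>x. if (A x - B x) + (B x - A x) = 0 then 0 else 1)"
    by (intro cf_cond cf_add cf_sub cf_const)
  then show ?thesis unfolding cpred_def by (rule cfun_cong) auto
qed

lemma cp_le: "cfun A \<Longrightarrow> cfun B \<Longrightarrow> cpred (\<lambda>x. A x \<le> B x)"
proof -
  assume "cfun A" "cfun B"
  then have "cfun (\<lambda>x. if A x - B x = 0 then 0 else 1)"
    by (intro cf_cond cf_sub cf_const)
  then show ?thesis unfolding cpred_def by (rule cfun_cong) auto
qed

lemma cp_less: "cfun A \<Longrightarrow> cfun B \<Longrightarrow> cpred (\<lambda>x. A x < B x)"
proof -
  assume "cfun A" "cfun B"
  then have "cpred (\<lambda>x. Suc (A x) \<le> B x)" by (intro cp_le cf_Suc)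
  then show ?thesis by (rule cpred_cong) (simp add: Suc_le_eq)
qed

lemma cp_not: "cpred P \<Longrightarrow> cpred (\<lambda>x. \<not> P x)"
proof -
  assume "cpred P"
  then have "cfun (\<lambda>x. if P x then 1 else 0)" by (intro cf_if cf_const)
  then show ?thesis unfolding cpred_def by (rule cfun_cong) auto
qed

lemma cp_and: "cpred P \<Longrightarrow> cpred Q \<Longrightarrow> cpred (\<lambda>x. P x \<and> Q x)"
proof -
  assume p: "cpred P" and q: "cpred Q"
  have "cfun (\<lambda>x. if P x then (if Q x then 0 else 1) else 1)"
    by (rule cf_if[OF p q[unfolded cpred_def] cf_const])
  then show ?thesis unfolding cpred_def by (rule cfun_cong) auto
qed

lemma cp_or: "cpred P \<Longrightarrow> cpred Q \<Longrightarrow> cpred (\<lambda>x. P x \<or> Q x)"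
proof -
  assume p: "cpred P" and q: "cpred Q"
  have "cfun (\<lambda>x. if P x then 0 else (if Q x then 0 else 1))"
    by (rule cf_if[OF p cf_const q[unfolded cpred_def]])
  then show ?thesis unfolding cpred_def by (rule cfun_cong) auto
qed

lemma cp_imp: "cpred P \<Longrightarrow> cpred Q \<Longrightarrow> cpred (\<lambda>x. P x \<longrightarrow> Q x)"
proof -
  assume "cpred P" "cpred Q"
  then have "cpred (\<lambda>x. \<not> P x \<or> Q x)" by (intro cp_or cp_not)
  then show ?thesis by (rule cpred_cong) simp
qed

lemma cp_bin: "cpred (\<lambda>z. P (fst (prod_decode z)) (snd (prod_decode z))) \<Longrightarrow> cfun A \<Longrightarrow> cfun B \<Longrightarrow> cpred (\<lambda>x. P (A x) (B x))"
  unfolding cpred_def by (drule cf_bin) auto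

lemma precf_ball: "precf (\<lambda>y. 0) (\<lambda>w. if fst (prod_decode (snd (prod_decode w))) = 0 \<and> P (fst (prod_decode w)) (snd (prod_decode (snd (prod_decode w)))) then 0 else 1) n y
  = (if \<forall>i<n. P i y then 0 else 1)"
  by (induction n) (auto simp: less_Suc_eq)

lemma cp_ball: "cpred (\<lambda>z. P (fst (prod_decode z)) (snd (prod_decode z))) \<Longrightarrow> cfun B \<Longrightarrow> cpred (\<lambda>x. \<forall>i<B x. P i x)"
proof -
  assume p: "cpred (\<lambda>z. P (fst (prod_decode z)) (snd (prod_decode z)))" and b: "cfun B"
  have "cpred (\<lambda>w. P (fst (prod_decode w)) (snd (prod_decode (snd (prod_decode w)))))"
    by (rule cp_bin[OF p]) (intro cf_fst cf_snd cf_id)+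
  then have "cfun (\<lambda>x. precf (\<lambda>y. 0) (\<lambda>w. if fst (prod_decode (snd (prod_decode w))) = 0 \<and> P (fst (prod_decode w)) (snd (prod_decode (snd (prod_decode w)))) then 0 else 1) (B x) x)"
    using b by (intro cf_prec cf_const cf_if cp_and cp_eq cf_fst cf_snd cf_id)
  then show ?thesis unfolding cpred_def by (rule cfun_cong) (simp only: precf_ball)
qed

lemma cp_bex: "cpred (\<lambda>z. P (fst (prod_decode z)) (snd (prod_decode z))) \<Longrightarrow> cfun B \<Longrightarrow> cpred (\<lambda>x. \<exists>i<B x. P i x)"
proof -
  assume "cpred (\<lambda>z. P (fst (prod_decode z)) (snd (prod_decode z)))" "cfun B"
  then have "cpred (\<lambda>x. \<not> (\<forall>i<B x. \<not> P i x))" by (intro cp_not cp_ball)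
  then show ?thesis by (rule cpred_cong) simp
qed

lemma lt_mult_Suc: "0 < (b::nat) \<Longrightarrow> a < b * Suc a"
  by (cases b) auto

lemma div_least: "(LEAST q. (if (b::nat) = 0 \<or> a < b * Suc q then 0 else 1::nat) = 0) = a div b"
proof (cases "b = 0")
  case True then show ?thesis by simp
next
  case False
  have "(LEAST q. a < b * Suc q) = a div b"
  proof (rule Least_equality)
    have h1: "a = b * (a div b) + a mod b" by simp
    have h2: "a mod b < b" using False by simp
    show "a < b * Suc (a div b)" using h1 h2 by (simp only: mult_Suc_right; linarith)
    fix q assume "a < b * Suc q"
    then have "a < Suc q * b" by (simp only: mult.commute)
    then have "a div b < Suc q" by (rule less_mult_imp_div_less)
    then show "a div b \<le> q" by simp
  qed
  then show ?thesis using False by simp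
qed

lemma cf_div: "cfun A \<Longrightarrow> cfun B \<Longrightarrow> cfun (\<lambda>x. A x div B x)"
proof -
  let ?F = "\<lambda>w. if snd (prod_decode (snd (prod_decode w))) = 0 \<or> fst (prod_decode (snd (prod_decode w))) < snd (prod_decode (snd (prod_decode w))) * Suc (fst (prod_decode w)) then 0 else 1::nat"
  have "cfun ?F" by (intro cf_if cp_or cp_eq cp_less cf_mult cf_Suc cf_fst cf_snd cf_id cf_const)
  moreover have "\<forall>z. \<exists>q. ?F (prod_encode (q, z)) = 0"
  proof
    fix z
    show "\<exists>q. ?F (prod_encode (q, z)) = 0"
    proof (cases "snd (prod_decode z) = 0")
      case True then show ?thesis by simp
    next
      case False
      then have "fst (prod_decode z) < snd (prod_decode z) * Suc (fst (prod_decode z))" by (intro lt_mult_Suc) simp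
      then show ?thesis by (intro exI[of _ "fst (prod_decode z)"]) simp
    qed
  qed
  ultimately have "cfun (\<lambda>z. LEAST q. ?F (prod_encode (q, z)) = 0)" by (rule cf_mu)
  then have "cfun (\<lambda>z. fst (prod_decode z) div snd (prod_decode z))" by (rule cfun_cong) (simp only: prod_encode_inverse fst_conv snd_conv div_least)
  then show "cfun A \<Longrightarrow> cfun B \<Longrightarrow> cfun (\<lambda>x. A x div B x)" by (rule cf_bin)
qed

lemma cf_mod: "cfun A \<Longrightarrow> cfun B \<Longrightarrow> cfun (\<lambda>x. A x mod B x)"
proof -
  assume "cfun A" "cfun B"
  then have "cfun (\<lambda>x. A x - B x * (A x div B x))" by (intro cf_sub cf_mult cf_div)
  then show ?thesis by (rule cfun_cong) (simp add: minus_mult_div_eq_mod)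
qed

lemma precf_pow: "precf (\<lambda>y. 1) (\<lambda>w. fst (prod_decode (snd (prod_decode w))) + fst (prod_decode (snd (prod_decode w)))) n y = 2 ^ n"
  by (induction n) auto

lemma cf_pow2: "cfun A \<Longrightarrow> cfun (\<lambda>x. 2 ^ A x)"
proof -
  have "cfun (\<lambda>x. precf (\<lambda>y. 1) (\<lambda>w. fst (prod_decode (snd (prod_decode w))) + fst (prod_decode (snd (prod_decode w)))) (A x) 0)"
    if "cfun A" using that by (intro cf_prec cf_const cf_add cf_fst cf_snd cf_id)
  then show "cfun A \<Longrightarrow> cfun (\<lambda>x. 2 ^ A x)" unfolding precf_pow prod_encode_inverse fst_conv snd_conv .
qed

lemma cp_bit: "cfun U \<Longrightarrow> cfun K \<Longrightarrow> cpred (\<lambda>x. bit (U x) (K x))"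
proof -
  assume "cfun U" "cfun K"
  then have "cpred (\<lambda>x. \<not> (U x div 2 ^ K x) mod 2 = 0)" by (intro cp_not cp_eq cf_mod cf_div cf_pow2 cf_const)
  then show ?thesis by (rule cpred_cong) (simp add: bit_iff_odd even_iff_mod_2_eq_zero)
qed

lemma cp_even: "cfun A \<Longrightarrow> cpred (\<lambda>x. even (A x))"
proof -
  assume "cfun A"
  then have "cpred (\<lambda>x. A x mod 2 = 0)" by (intro cp_eq cf_mod cf_const)
  then show ?thesis by (rule cpred_cong) (simp add: even_iff_mod_2_eq_zero)
qed

fun sndpow :: "nat \<Rightarrow> nat \<Rightarrow> nat" where
  "sndpow 0 d = d"
| "sndpow (Suc j) d = snd (prod_decode (sndpow j d))"

lemma precf_sndpow: "precf (\<lambda>y. y) (\<lambda>w. snd (prod_decode (fst (prod_decode (snd (prod_decode w)))))) n y = sndpow n y"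
  by (induction n) auto

lemma cf_sndpow: "cfun J \<Longrightarrow> cfun A \<Longrightarrow> cfun (\<lambda>x. sndpow (J x) (A x))"
proof -
  have "cfun (\<lambda>x. precf (\<lambda>y. y) (\<lambda>w. snd (prod_decode (fst (prod_decode (snd (prod_decode w)))))) (J x) (A x))"
    if "cfun J" "cfun A" using that by (intro cf_prec cf_id cf_fst cf_snd)
  then show "cfun J \<Longrightarrow> cfun A \<Longrightarrow> cfun (\<lambda>x. sndpow (J x) (A x))" unfolding precf_sndpow prod_encode_inverse fst_conv snd_conv .
qed

lemmas cf_intros = cf_const cp_const cf_id cf_Suc cf_fst cf_snd cf_pair cf_add cf_sub cf_mult cf_div cf_mod cf_pow2
  cf_sndpow cf_if cp_eq cp_le cp_less cp_not cp_and cp_or cp_imp cp_ball cp_bex cp_bit cp_even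


primrec enc :: "prog \<Rightarrow> nat" where
  "enc Zero = 0" | "enc Succ = 1" | "enc Ident = 2" | "enc Fst = 3" | "enc Snd = 4" | "enc Query = 5"
| "enc (PairP a b) = 6 + 10 * prod_encode (enc a, enc b)"
| "enc (Comp a b) = 7 + 10 * prod_encode (enc a, enc b)"
| "enc (Prec a b) = 8 + 10 * prod_encode (enc a, enc b)"
| "enc (Mu a) = 9 + 10 * enc a"

lemma decode_enc: "decode (enc p) = p"
proof (induction p)
  case Zero show ?case by (subst decode.simps) simp
next
  case Succ show ?case by (subst decode.simps) simp
next
  case Ident show ?case by (subst decode.simps) simp
next
  case Fst show ?case by (subst decode.simps) simp
next
  case Snd show ?case by (subst decode.simps) simp
next
  case Query show ?case by (subst decode.simps) simp
next
  case (PairP p1 p2) then show ?case by (subst decode.simps) simp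
next
  case (Comp p1 p2) then show ?case by (subst decode.simps) simp
next
  case (Prec p1 p2) then show ?case by (subst decode.simps) simp
next
  case (Mu p) then show ?case by (subst decode.simps) simp
qed

lemma Phi_ne_None: "Phi e orc n \<noteq> None \<longleftrightarrow> (\<exists>y. ev orc (decode e) n y)"
  by (simp add: Phi_def)

lemma ce_mu: "computes p C \<Longrightarrow> ce {n. \<exists>y. C (prod_encode (y, n)) = 0}"
proof -
  assume cp: "computes p C"
  have "{n. \<exists>y. C (prod_encode (y, n)) = 0} = {n. Phi (enc (Mu p)) (\<lambda>_. None) n \<noteq> None}"
  proof (rule set_eqI)
    fix n
    have ev_iff: "ev (\<lambda>_. None) (Mu p) n y \<longleftrightarrow> C (prod_encode (y, n)) = 0 \<and> (\<forall>i<y. C (prod_encode (i, n)) \<noteq> 0)" for y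
      using cp unfolding computes_def by (auto simp: ev_Mu)
    have "(\<exists>y. C (prod_encode (y, n)) = 0) \<longleftrightarrow> (\<exists>y. ev (\<lambda>_. None) (Mu p) n y)"
    proof
      assume "\<exists>y. C (prod_encode (y, n)) = 0"
      then have "C (prod_encode (LEAST y. C (prod_encode (y, n)) = 0, n)) = 0 \<and>
         (\<forall>i<(LEAST y. C (prod_encode (y, n)) = 0). C (prod_encode (i, n)) \<noteq> 0)"
        by (metis (mono_tags, lifting) LeastI not_less_Least)
      then show "\<exists>y. ev (\<lambda>_. None) (Mu p) n y" using ev_iff by blast
    next
      assume "\<exists>y. ev (\<lambda>_. None) (Mu p) n y"
      then show "\<exists>y. C (prod_encode (y, n)) = 0" using ev_iff by blast
    qed
    then show "n \<in> {n. \<exists>y. C (prod_encode (y, n)) = 0} \<longleftrightarrow> n \<in> {n. Phi (enc (Mu p)) (\<lambda>_. None) n \<noteq> None}"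
      unfolding mem_Collect_eq Phi_ne_None decode_enc .
  qed
  then show ?thesis unfolding ce_def by blast
qed

lemma ce_cpred: "cpred (\<lambda>z. Q (fst (prod_decode z)) (snd (prod_decode z))) \<Longrightarrow> ce {n. \<exists>y. Q y n}"
proof -
  assume "cpred (\<lambda>z. Q (fst (prod_decode z)) (snd (prod_decode z)))"
  then obtain p where p: "computes p (\<lambda>z. if Q (fst (prod_decode z)) (snd (prod_decode z)) then 0 else 1)"
    unfolding cpred_def cfun_def by blast
  have eq: "{n. \<exists>y. (if Q (fst (prod_decode (prod_encode (y, n)))) (snd (prod_decode (prod_encode (y, n)))) then 0 else 1) = (0::nat)} = {n. \<exists>y. Q y n}"
    by simp
  from ce_mu[OF p] show ?thesis unfolding eq .
qed

inductive_set gclos :: "(nat \<Rightarrow> nat \<Rightarrow> bool) \<Rightarrow> (nat \<Rightarrow> nat \<Rightarrow> nat) \<Rightarrow> (nat \<Rightarrow> nat \<Rightarrow> nat) \<Rightarrow> nat set"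
  for D P1 P2 where
  gI: "D x w \<Longrightarrow> (P1 x w = 0 \<or> P1 x w - 1 \<in> gclos D P1 P2) \<Longrightarrow> (P2 x w = 0 \<or> P2 x w - 1 \<in> gclos D P1 P2) \<Longrightarrow> x \<in> gclos D P1 P2"

definition lx :: "nat \<Rightarrow> nat \<Rightarrow> nat" where
  "lx d j = fst (prod_decode (fst (prod_decode (sndpow j d))))"
definition lw :: "nat \<Rightarrow> nat \<Rightarrow> nat" where
  "lw d j = snd (prod_decode (fst (prod_decode (sndpow j d))))"

definition valid :: "(nat \<Rightarrow> nat \<Rightarrow> bool) \<Rightarrow> (nat \<Rightarrow> nat \<Rightarrow> nat) \<Rightarrow> (nat \<Rightarrow> nat \<Rightarrow> nat) \<Rightarrow> nat \<Rightarrow> bool" where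
  "valid D P1 P2 L \<longleftrightarrow> (\<forall>i < fst (prod_decode L).
      D (lx (snd (prod_decode L)) i) (lw (snd (prod_decode L)) i)
    \<and> (P1 (lx (snd (prod_decode L)) i) (lw (snd (prod_decode L)) i) = 0 \<or>
       (\<exists>j<i. lx (snd (prod_decode L)) j = P1 (lx (snd (prod_decode L)) i) (lw (snd (prod_decode L)) i) - 1))
    \<and> (P2 (lx (snd (prod_decode L)) i) (lw (snd (prod_decode L)) i) = 0 \<or>
       (\<exists>j<i. lx (snd (prod_decode L)) j = P2 (lx (snd (prod_decode L)) i) (lw (snd (prod_decode L)) i) - 1)))"

lemma valid_sound: "valid D P1 P2 L \<Longrightarrow> i < fst (prod_decode L) \<Longrightarrow> lx (snd (prod_decode L)) i \<in> gclos D P1 P2"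
proof (induction i rule: less_induct)
  case (less i)
  let ?d = "snd (prod_decode L)"
  from less.prems have h: "D (lx ?d i) (lw ?d i)"
    "P1 (lx ?d i) (lw ?d i) = 0 \<or> (\<exists>j<i. lx ?d j = P1 (lx ?d i) (lw ?d i) - 1)"
    "P2 (lx ?d i) (lw ?d i) = 0 \<or> (\<exists>j<i. lx ?d j = P2 (lx ?d i) (lw ?d i) - 1)"
    unfolding valid_def by blast+
  have a1: "P1 (lx ?d i) (lw ?d i) = 0 \<or> P1 (lx ?d i) (lw ?d i) - 1 \<in> gclos D P1 P2"
    using h(2) less.IH less.prems by (metis less_trans)
  have a2: "P2 (lx ?d i) (lw ?d i) = 0 \<or> P2 (lx ?d i) (lw ?d i) - 1 \<in> gclos D P1 P2"
    using h(3) less.IH less.prems by (metis less_trans)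
  show ?case by (rule gI[OF h(1) a1 a2])
qed

fun ldata :: "(nat \<times> nat) list \<Rightarrow> nat" where
  "ldata [] = 0"
| "ldata (p # xs) = prod_encode (prod_encode p, ldata xs)"

definition lenc :: "(nat \<times> nat) list \<Rightarrow> nat" where
  "lenc xs = prod_encode (length xs, ldata xs)"

lemma sndpow_ldata: "j \<le> length xs \<Longrightarrow> sndpow j (ldata xs) = ldata (drop j xs)"
proof (induction j)
  case 0 then show ?case by simp
next
  case (Suc j)
  then have "j < length xs" by simp
  then have "drop j xs = xs ! j # drop (Suc j) xs" by (rule Cons_nth_drop_Suc[symmetric])
  with Suc show ?case by simp
qed

lemma lx_ldata: "j < length xs \<Longrightarrow> lx (ldata xs) j = fst (xs ! j)"
  unfolding lx_def by (simp add: sndpow_ldata Cons_nth_drop_Suc[symmetric])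

lemma lw_ldata: "j < length xs \<Longrightarrow> lw (ldata xs) j = snd (xs ! j)"
  unfolding lw_def by (simp add: sndpow_ldata Cons_nth_drop_Suc[symmetric])

definition validL :: "(nat \<Rightarrow> nat \<Rightarrow> bool) \<Rightarrow> (nat \<Rightarrow> nat \<Rightarrow> nat) \<Rightarrow> (nat \<Rightarrow> nat \<Rightarrow> nat) \<Rightarrow> (nat \<times> nat) list \<Rightarrow> bool" where
  "validL D P1 P2 xs \<longleftrightarrow> (\<forall>i < length xs.
      D (fst (xs ! i)) (snd (xs ! i))
    \<and> (P1 (fst (xs ! i)) (snd (xs ! i)) = 0 \<or> P1 (fst (xs ! i)) (snd (xs ! i)) - 1 \<in> fst ` set (take i xs))
    \<and> (P2 (fst (xs ! i)) (snd (xs ! i)) = 0 \<or> P2 (fst (xs ! i)) (snd (xs ! i)) - 1 \<in> fst ` set (take i xs)))"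

lemma in_take_iff: "i \<le> length xs \<Longrightarrow> v \<in> fst ` set (take i xs) \<longleftrightarrow> (\<exists>j<i. fst (xs ! j) = v)"
proof
  assume "i \<le> length xs" "v \<in> fst ` set (take i xs)"
  then obtain p where "p \<in> set (take i xs)" "v = fst p" by blast
  then obtain j where "j < length (take i xs)" "take i xs ! j = p" by (metis in_set_conv_nth)
  then show "\<exists>j<i. fst (xs ! j) = v" using \<open>v = fst p\<close> by (intro exI[of _ j]) auto
next
  assume "i \<le> length xs" "\<exists>j<i. fst (xs ! j) = v"
  then obtain j where j: "j < i" "fst (xs ! j) = v" by blast
  then have "take i xs ! j \<in> set (take i xs)" using \<open>i \<le> length xs\<close> by (intro nth_mem) simp
  then show "v \<in> fst ` set (take i xs)" using j \<open>i \<le> length xs\<close> by (metis image_eqI nth_take)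
qed

lemma valid_lenc: assumes v: "validL D P1 P2 xs" shows "valid D P1 P2 (lenc xs)"
  unfolding valid_def lenc_def prod_encode_inverse fst_conv snd_conv
proof (intro allI impI)
  fix i assume i: "i < length xs"
  have ex: "(\<exists>j<i. lx (ldata xs) j = v) \<longleftrightarrow> v \<in> fst ` set (take i xs)" for v
  proof -
    have "(\<exists>j<i. lx (ldata xs) j = v) \<longleftrightarrow> (\<exists>j<i. fst (xs ! j) = v)"
    proof
      assume "\<exists>j<i. lx (ldata xs) j = v"
      then obtain j where "j < i" "lx (ldata xs) j = v" by blast
      then show "\<exists>j<i. fst (xs ! j) = v" using i lx_ldata[of j xs] by (intro exI[of _ j]) simp
    next
      assume "\<exists>j<i. fst (xs ! j) = v"
      then obtain j where "j < i" "fst (xs ! j) = v" by blast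
      then show "\<exists>j<i. lx (ldata xs) j = v" using i lx_ldata[of j xs] by (intro exI[of _ j]) simp
    qed
    also have "\<dots> \<longleftrightarrow> v \<in> fst ` set (take i xs)" using i by (simp add: in_take_iff)
    finally show ?thesis .
  qed
  from v i have "D (fst (xs ! i)) (snd (xs ! i))
    \<and> (P1 (fst (xs ! i)) (snd (xs ! i)) = 0 \<or> P1 (fst (xs ! i)) (snd (xs ! i)) - 1 \<in> fst ` set (take i xs))
    \<and> (P2 (fst (xs ! i)) (snd (xs ! i)) = 0 \<or> P2 (fst (xs ! i)) (snd (xs ! i)) - 1 \<in> fst ` set (take i xs))"
    unfolding validL_def by blast
  then show "D (lx (ldata xs) i) (lw (ldata xs) i) \<and>
         (P1 (lx (ldata xs) i) (lw (ldata xs) i) = 0 \<or>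
          (\<exists>j<i. lx (ldata xs) j = P1 (lx (ldata xs) i) (lw (ldata xs) i) - 1)) \<and>
         (P2 (lx (ldata xs) i) (lw (ldata xs) i) = 0 \<or>
          (\<exists>j<i. lx (ldata xs) j = P2 (lx (ldata xs) i) (lw (ldata xs) i) - 1))"
    unfolding ex lx_ldata[OF i] lw_ldata[OF i] .
qed

lemma validL_append: "validL D P1 P2 xs \<Longrightarrow> validL D P1 P2 ys \<Longrightarrow> validL D P1 P2 (xs @ ys)"
  unfolding validL_def
proof (intro allI impI)
  fix i
  assume vx: "\<forall>i<length xs. D (fst (xs ! i)) (snd (xs ! i)) \<and>
          (P1 (fst (xs ! i)) (snd (xs ! i)) = 0 \<or> P1 (fst (xs ! i)) (snd (xs ! i)) - 1 \<in> fst ` set (take i xs)) \<and>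
          (P2 (fst (xs ! i)) (snd (xs ! i)) = 0 \<or> P2 (fst (xs ! i)) (snd (xs ! i)) - 1 \<in> fst ` set (take i xs))"
    and vy: "\<forall>i<length ys. D (fst (ys ! i)) (snd (ys ! i)) \<and>
          (P1 (fst (ys ! i)) (snd (ys ! i)) = 0 \<or> P1 (fst (ys ! i)) (snd (ys ! i)) - 1 \<in> fst ` set (take i ys)) \<and>
          (P2 (fst (ys ! i)) (snd (ys ! i)) = 0 \<or> P2 (fst (ys ! i)) (snd (ys ! i)) - 1 \<in> fst ` set (take i ys))"
    and i: "i < length (xs @ ys)"
  show "D (fst ((xs @ ys) ! i)) (snd ((xs @ ys) ! i)) \<and>
       (P1 (fst ((xs @ ys) ! i)) (snd ((xs @ ys) ! i)) = 0 \<or>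
        P1 (fst ((xs @ ys) ! i)) (snd ((xs @ ys) ! i)) - 1 \<in> fst ` set (take i (xs @ ys))) \<and>
       (P2 (fst ((xs @ ys) ! i)) (snd ((xs @ ys) ! i)) = 0 \<or>
        P2 (fst ((xs @ ys) ! i)) (snd ((xs @ ys) ! i)) - 1 \<in> fst ` set (take i (xs @ ys)))"
  proof (cases "i < length xs")
    case True
    then have e: "(xs @ ys) ! i = xs ! i" "take i (xs @ ys) = take i xs" by (simp_all add: nth_append)
    show ?thesis unfolding e using vx True by blast
  next
    case False
    let ?k = "i - length xs"
    have k: "?k < length ys" using i False by simp
    have e: "(xs @ ys) ! i = ys ! ?k" "take i (xs @ ys) = xs @ take ?k ys" using False by (simp_all add: nth_append)
    show ?thesis unfolding e using vy k by auto
  qed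
qed

lemma validL_snoc: "validL D P1 P2 zs \<Longrightarrow> D x w \<Longrightarrow>
   (P1 x w = 0 \<or> P1 x w - 1 \<in> fst ` set zs) \<Longrightarrow> (P2 x w = 0 \<or> P2 x w - 1 \<in> fst ` set zs) \<Longrightarrow>
   validL D P1 P2 (zs @ [(x, w)])"
  unfolding validL_def
proof (intro allI impI)
  fix i
  assume vz: "\<forall>i<length zs. D (fst (zs ! i)) (snd (zs ! i)) \<and>
          (P1 (fst (zs ! i)) (snd (zs ! i)) = 0 \<or> P1 (fst (zs ! i)) (snd (zs ! i)) - 1 \<in> fst ` set (take i zs)) \<and>
          (P2 (fst (zs ! i)) (snd (zs ! i)) = 0 \<or> P2 (fst (zs ! i)) (snd (zs ! i)) - 1 \<in> fst ` set (take i zs))"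
    and h: "D x w" "P1 x w = 0 \<or> P1 x w - 1 \<in> fst ` set zs" "P2 x w = 0 \<or> P2 x w - 1 \<in> fst ` set zs"
    and i: "i < length (zs @ [(x, w)])"
  show "D (fst ((zs @ [(x, w)]) ! i)) (snd ((zs @ [(x, w)]) ! i)) \<and>
       (P1 (fst ((zs @ [(x, w)]) ! i)) (snd ((zs @ [(x, w)]) ! i)) = 0 \<or>
        P1 (fst ((zs @ [(x, w)]) ! i)) (snd ((zs @ [(x, w)]) ! i)) - 1 \<in> fst ` set (take i (zs @ [(x, w)]))) \<and>
       (P2 (fst ((zs @ [(x, w)]) ! i)) (snd ((zs @ [(x, w)]) ! i)) = 0 \<or>
        P2 (fst ((zs @ [(x, w)]) ! i)) (snd ((zs @ [(x, w)]) ! i)) - 1 \<in> fst ` set (take i (zs @ [(x, w)])))"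
  proof (cases "i < length zs")
    case True
    then have e: "(zs @ [(x, w)]) ! i = zs ! i" "take i (zs @ [(x, w)]) = take i zs" by (simp_all add: nth_append)
    show ?thesis unfolding e using vz True by blast
  next
    case False
    then have ii: "i = length zs" using i by simp
    have e: "(zs @ [(x, w)]) ! i = (x, w)" "take i (zs @ [(x, w)]) = zs" using ii by simp_all
    show ?thesis unfolding e using h by simp
  qed
qed

lemma gclos_complete: "x \<in> gclos D P1 P2 \<Longrightarrow> \<exists>xs. validL D P1 P2 xs \<and> x \<in> fst ` set xs"
proof (induction rule: gclos.induct)
  case (gI x w)
  obtain xs1 where xs1: "validL D P1 P2 xs1" "P1 x w = 0 \<or> P1 x w - 1 \<in> fst ` set xs1"
  proof (cases "P1 x w = 0")
    case True then show ?thesis using that[of "[]"] by (simp add: validL_def)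
  next
    case False
    with gI.IH(1) obtain ys where "validL D P1 P2 ys" "P1 x w - 1 \<in> fst ` set ys" by auto
    then show ?thesis by (intro that[of ys]) auto
  qed
  obtain xs2 where xs2: "validL D P1 P2 xs2" "P2 x w = 0 \<or> P2 x w - 1 \<in> fst ` set xs2"
  proof (cases "P2 x w = 0")
    case True then show ?thesis using that[of "[]"] by (simp add: validL_def)
  next
    case False
    with gI.IH(2) obtain ys where "validL D P1 P2 ys" "P2 x w - 1 \<in> fst ` set ys" by auto
    then show ?thesis by (intro that[of ys]) auto
  qed
  have v: "validL D P1 P2 (xs1 @ xs2)" using xs1(1) xs2(1) by (rule validL_append)
  have "validL D P1 P2 ((xs1 @ xs2) @ [(x, w)])"
    by (rule validL_snoc[OF v gI.hyps(1)]) (use xs1(2) xs2(2) in auto)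
  then show ?case by (intro exI[of _ "(xs1 @ xs2) @ [(x, w)]"]) auto
qed

lemma gclos_iff: "x \<in> gclos D P1 P2 \<longleftrightarrow> (\<exists>L. valid D P1 P2 L \<and> (\<exists>i<fst (prod_decode L). lx (snd (prod_decode L)) i = x))"
proof
  assume "x \<in> gclos D P1 P2"
  from gclos_complete[OF this] obtain xs where xs: "validL D P1 P2 xs" "x \<in> fst ` set xs" by blast
  from xs(2) obtain i where "i < length xs" "fst (xs ! i) = x" by (metis in_set_conv_nth imageE)
  then show "\<exists>L. valid D P1 P2 L \<and> (\<exists>i<fst (prod_decode L). lx (snd (prod_decode L)) i = x)"
    using valid_lenc[OF xs(1)] by (intro exI[of _ "lenc xs"]) (auto simp: lenc_def lx_ldata)
next
  assume "\<exists>L. valid D P1 P2 L \<and> (\<exists>i<fst (prod_decode L). lx (snd (prod_decode L)) i = x)"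
  then show "x \<in> gclos D P1 P2" using valid_sound by blast
qed

lemma gclos_ce:
  assumes cD: "cpred (\<lambda>z. D (fst (prod_decode z)) (snd (prod_decode z)))"
    and c1: "cfun (\<lambda>z. P1 (fst (prod_decode z)) (snd (prod_decode z)))"
    and c2: "cfun (\<lambda>z. P2 (fst (prod_decode z)) (snd (prod_decode z)))"
    and cg: "cfun g"
  shows "ce {n. g n \<in> gclos D P1 P2}"
proof -
  have rD: "cfun A \<Longrightarrow> cfun B \<Longrightarrow> cpred (\<lambda>x. D (A x) (B x))" for A B by (rule cp_bin[OF cD])
  have r1: "cfun A \<Longrightarrow> cfun B \<Longrightarrow> cfun (\<lambda>x. P1 (A x) (B x))" for A B by (rule cf_bin[OF c1])
  have r2: "cfun A \<Longrightarrow> cfun B \<Longrightarrow> cfun (\<lambda>x. P2 (A x) (B x))" for A B by (rule cf_bin[OF c2])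
  have rg: "cfun A \<Longrightarrow> cfun (\<lambda>x. g (A x))" for A by (rule cf_comp[OF cg])
  let ?Q = "\<lambda>L n. valid D P1 P2 L \<and> (\<exists>i<fst (prod_decode L). lx (snd (prod_decode L)) i = g n)"
  have "cpred (\<lambda>z. ?Q (fst (prod_decode z)) (snd (prod_decode z)))"
    unfolding valid_def lx_def lw_def
    by (intro rD r1 r2 rg cf_intros)
  then have "ce {n. \<exists>L. ?Q L n}" by (rule ce_cpred)
  moreover have "{n. \<exists>L. ?Q L n} = {n. g n \<in> gclos D P1 P2}" by (simp add: gclos_iff)
  ultimately show ?thesis by simp
qed


abbreviation p1 :: "nat \<Rightarrow> nat" where "p1 x \<equiv> fst (prod_decode x)"
abbreviation p2 :: "nat \<Rightarrow> nat" where "p2 x \<equiv> snd (prod_decode x)"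
abbreviation pe2 :: "nat \<Rightarrow> nat \<Rightarrow> nat" where "pe2 a b \<equiv> prod_encode (a, b)"

abbreviation fa :: "nat \<Rightarrow> nat" where "fa x \<equiv> p1 (p2 x)"
abbreviation fb :: "nat \<Rightarrow> nat" where "fb x \<equiv> p1 (p2 (p2 x))"
abbreviation fc :: "nat \<Rightarrow> nat" where "fc x \<equiv> p1 (p2 (p2 (p2 x)))"
abbreviation fd :: "nat \<Rightarrow> nat" where "fd x \<equiv> p2 (p2 (p2 (p2 x)))"
abbreviation fe :: "nat \<Rightarrow> nat" where "fe x \<equiv> p2 (p2 x)"
abbreviation ff :: "nat \<Rightarrow> nat" where "ff x \<equiv> p2 (p2 (p2 x))"

abbreviation evf :: "nat \<Rightarrow> nat \<Rightarrow> nat \<Rightarrow> nat \<Rightarrow> nat" where "evf a c i ou \<equiv> pe2 0 (pe2 a (pe2 c (pe2 i ou)))"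
abbreviation muf :: "nat \<Rightarrow> nat \<Rightarrow> nat \<Rightarrow> nat \<Rightarrow> nat" where "muf a c i k \<equiv> pe2 1 (pe2 a (pe2 c (pe2 i k)))"
abbreviation subf :: "nat \<Rightarrow> nat \<Rightarrow> nat \<Rightarrow> nat \<Rightarrow> nat" where "subf t a c k \<equiv> pe2 2 (pe2 t (pe2 a (pe2 c k)))"
abbreviation memf :: "nat \<Rightarrow> nat \<Rightarrow> nat" where "memf m t \<equiv> pe2 3 (pe2 m t)"
abbreviation topf :: "nat \<Rightarrow> nat \<Rightarrow> nat \<Rightarrow> nat" where "topf e m u \<equiv> pe2 4 (pe2 e (pe2 m u))"

definition tabrel :: "nat \<Rightarrow> nat \<Rightarrow> nat \<Rightarrow> bool" where
  "tabrel t x v \<longleftrightarrow> bit t (pe2 (pe2 x v) 1) \<and> (\<forall>w<v. \<not> bit t (pe2 (pe2 x w) 1))"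

lemma tab_tabrel: "tab t x = Some v \<longleftrightarrow> tabrel t x v"
  by (simp add: tab_Some tabrel_def)

definition sigY :: "nat \<Rightarrow> nat \<Rightarrow> nat option" where
  "sigY u x = (if bit u (2 * x) then Some 1 else if bit u (2 * x + 1) then Some 0 else None)"

definition orcl :: "nat \<Rightarrow> nat \<Rightarrow> nat option" where
  "orcl a = (if p1 a = 0 then sigY (p2 a) else pjoin (tab (p1 (p2 a))) (tab (p2 (p2 a))))"

definition Orel :: "nat \<Rightarrow> nat \<Rightarrow> nat \<Rightarrow> bool" where
  "Orel a x v \<longleftrightarrow> (if p1 a = 0 then (bit (p2 a) (2 * x) \<and> v = 1) \<or> (\<not> bit (p2 a) (2 * x) \<and> bit (p2 a) (2 * x + 1) \<and> v = 0)
     else if even x then tabrel (p1 (p2 a)) (x div 2) v else tabrel (p2 (p2 a)) (x div 2) v)"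

lemma orcl_Some: "orcl a x = Some v \<longleftrightarrow> Orel a x v"
  by (auto simp: orcl_def Orel_def sigY_def pjoin_def tab_tabrel)

lemma orcl_0: "orcl (pe2 0 u) = sigY u"
  by (simp add: orcl_def)

lemma orcl_1: "orcl (pe2 1 (pe2 t u)) = pjoin (tab t) (tab u)"
  by (simp add: orcl_def)

definition Dr :: "nat \<Rightarrow> nat \<Rightarrow> bool" where
  "Dr x w \<longleftrightarrow>
   (if p1 x = 0 then
      (if fb x mod 10 = 0 then fd x = 0
       else if fb x mod 10 = 1 then fd x = Suc (fc x)
       else if fb x mod 10 = 2 then fd x = fc x
       else if fb x mod 10 = 3 then fd x = p1 (fc x)
       else if fb x mod 10 = 4 then fd x = p2 (fc x)
       else if fb x mod 10 = 5 then Orel (fa x) (fc x) (fd x)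
       else if fb x mod 10 = 6 then fd x = pe2 (p1 (fd x)) (p2 (fd x))
       else True)
    else if p1 x = 1 then (fd x = 0 \<or> w \<noteq> 0)
    else if p1 x = 2 then True
    else if p1 x = 3 then
      (if p2 (fa x) = 1 then tabrel (fe x) (p1 (p1 (fa x))) (p2 (p1 (fa x)))
       else fa x \<noteq> 0 \<and> \<not> bit (p2 (fa x)) 0 \<and> tabrel (fe x) 0 (p2 w))
    else if p1 x = 4 then True
    else False)"

definition P1r :: "nat \<Rightarrow> nat \<Rightarrow> nat" where
  "P1r x w =
   (if p1 x = 0 then
      (if fb x mod 10 = 6 then Suc (evf (fa x) (p1 (fb x div 10)) (fc x) (p1 (fd x)))
       else if fb x mod 10 = 7 then Suc (evf (fa x) (p2 (fb x div 10)) (fc x) w)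
       else if fb x mod 10 = 8 then
         (if p1 (fc x) = 0 then Suc (evf (fa x) (p1 (fb x div 10)) (p2 (fc x)) (fd x))
          else Suc (evf (fa x) (fb x) (pe2 (p1 (fc x) - 1) (p2 (fc x))) w))
       else if fb x mod 10 = 9 then Suc (evf (fa x) (fb x div 10) (pe2 (fd x) (fc x)) 0)
       else 0)
    else if p1 x = 1 then (if fd x = 0 then 0 else Suc (muf (fa x) (fb x) (fc x) (fd x - 1)))
    else if p1 x = 2 then (if fd x = 0 then 0 else Suc (subf (fa x) (fb x) (fc x) (fd x - 1)))
    else if p1 x = 3 then (if p2 (fa x) = 1 then 0 else Suc (subf (p1 w) (pe2 1 (pe2 (fe x) (p2 (fa x)))) (p2 w) (p1 w)))
    else if p1 x = 4 then Suc (subf w (pe2 0 (ff x)) (fa x) w)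
    else 0)"

definition P2r :: "nat \<Rightarrow> nat \<Rightarrow> nat" where
  "P2r x w =
   (if p1 x = 0 then
      (if fb x mod 10 = 6 then Suc (evf (fa x) (p2 (fb x div 10)) (fc x) (p2 (fd x)))
       else if fb x mod 10 = 7 then Suc (evf (fa x) (p1 (fb x div 10)) w (fd x))
       else if fb x mod 10 = 8 then
         (if p1 (fc x) = 0 then 0
          else Suc (evf (fa x) (p2 (fb x div 10)) (pe2 (p1 (fc x) - 1) (pe2 w (p2 (fc x)))) (fd x)))
       else if fb x mod 10 = 9 then Suc (muf (fa x) (fb x div 10) (fc x) (fd x))
       else 0)
    else if p1 x = 1 then (if fd x = 0 then 0 else Suc (evf (fa x) (fb x) (pe2 (fd x - 1) (fc x)) w))
    else if p1 x = 2 then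
      (if fd x = 0 then 0
       else if p2 (fd x - 1) = 1 \<and> tabrel (fa x) (p1 (p1 (fd x - 1))) (p2 (p1 (fd x - 1)))
       then Suc (evf (fb x) (fc x) (p1 (p1 (fd x - 1))) (p2 (p1 (fd x - 1)))) else 0)
    else if p1 x = 3 then (if p2 (fa x) = 1 then 0 else Suc (memf (p1 (fa x)) (p1 w)))
    else if p1 x = 4 then Suc (memf (fb x) w)
    else 0)"

abbreviation G :: "nat set" where "G \<equiv> gclos Dr P1r P2r"

lemma cp_if: "cpred P \<Longrightarrow> cpred Q \<Longrightarrow> cpred R \<Longrightarrow> cpred (\<lambda>x. if P x then Q x else R x)"
proof -
  assume "cpred P" "cpred Q" "cpred R"
  then have "cpred (\<lambda>x. (P x \<and> Q x) \<or> (\<not> P x \<and> R x))" by (intro cp_or cp_and cp_not)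
  then show ?thesis by (rule cpred_cong) simp
qed

lemma cD: "cpred (\<lambda>z. Dr (p1 z) (p2 z))"
  unfolding Dr_def Orel_def tabrel_def
  by (intro cp_if cf_intros)

lemma c1: "cfun (\<lambda>z. P1r (p1 z) (p2 z))"
  unfolding P1r_def
  by (intro cp_if cf_intros)

lemma c2: "cfun (\<lambda>z. P2r (p1 z) (p2 z))"
  unfolding P2r_def tabrel_def
  by (intro cp_if cf_intros)


lemma dc0: "c mod 10 = 0 \<Longrightarrow> decode c = Zero" by (subst decode.simps) simp
lemma dc1: "c mod 10 = 1 \<Longrightarrow> decode c = Succ" by (subst decode.simps) simp
lemma dc2: "c mod 10 = 2 \<Longrightarrow> decode c = Ident" by (subst decode.simps) simp
lemma dc3: "c mod 10 = 3 \<Longrightarrow> decode c = Fst" by (subst decode.simps) simp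
lemma dc4: "c mod 10 = 4 \<Longrightarrow> decode c = Snd" by (subst decode.simps) simp
lemma dc5: "c mod 10 = 5 \<Longrightarrow> decode c = Query" by (subst decode.simps) simp
lemma dc6: "c mod 10 = 6 \<Longrightarrow> decode c = PairP (decode (p1 (c div 10))) (decode (p2 (c div 10)))" by (subst decode.simps) simp
lemma dc7: "c mod 10 = 7 \<Longrightarrow> decode c = Comp (decode (p1 (c div 10))) (decode (p2 (c div 10)))" by (subst decode.simps) simp
lemma dc8: "c mod 10 = 8 \<Longrightarrow> decode c = Prec (decode (p1 (c div 10))) (decode (p2 (c div 10)))" by (subst decode.simps) simp
lemma dc9: "c mod 10 = 9 \<Longrightarrow> decode c = Mu (decode (c div 10))" by (subst decode.simps) simp

lemma mod10_cases: "(c::nat) mod 10 = 0 \<or> c mod 10 = 1 \<or> c mod 10 = 2 \<or> c mod 10 = 3 \<or> c mod 10 = 4 \<or>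
   c mod 10 = 5 \<or> c mod 10 = 6 \<or> c mod 10 = 7 \<or> c mod 10 = 8 \<or> c mod 10 = 9"
  by presburger

lemma di0: "decode c = Zero \<Longrightarrow> c mod 10 = 0"
  using mod10_cases[of c] dc1 dc2 dc3 dc4 dc5 dc6 dc7 dc8 dc9 by fastforce
lemma di1: "decode c = Succ \<Longrightarrow> c mod 10 = 1"
  using mod10_cases[of c] dc0 dc2 dc3 dc4 dc5 dc6 dc7 dc8 dc9 by fastforce
lemma di2: "decode c = Ident \<Longrightarrow> c mod 10 = 2"
  using mod10_cases[of c] dc0 dc1 dc3 dc4 dc5 dc6 dc7 dc8 dc9 by fastforce
lemma di3: "decode c = Fst \<Longrightarrow> c mod 10 = 3"
  using mod10_cases[of c] dc0 dc1 dc2 dc4 dc5 dc6 dc7 dc8 dc9 by fastforce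
lemma di4: "decode c = Snd \<Longrightarrow> c mod 10 = 4"
  using mod10_cases[of c] dc0 dc1 dc2 dc3 dc5 dc6 dc7 dc8 dc9 by fastforce
lemma di5: "decode c = Query \<Longrightarrow> c mod 10 = 5"
  using mod10_cases[of c] dc0 dc1 dc2 dc3 dc4 dc6 dc7 dc8 dc9 by fastforce
lemma di6: "decode c = PairP f g \<Longrightarrow> c mod 10 = 6 \<and> decode (p1 (c div 10)) = f \<and> decode (p2 (c div 10)) = g"
  using mod10_cases[of c] dc0 dc1 dc2 dc3 dc4 dc5 dc6 dc7 dc8 dc9 by fastforce
lemma di7: "decode c = Comp f g \<Longrightarrow> c mod 10 = 7 \<and> decode (p1 (c div 10)) = f \<and> decode (p2 (c div 10)) = g"
  using mod10_cases[of c] dc0 dc1 dc2 dc3 dc4 dc5 dc6 dc7 dc8 dc9 by fastforce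
lemma di8: "decode c = Prec f g \<Longrightarrow> c mod 10 = 8 \<and> decode (p1 (c div 10)) = f \<and> decode (p2 (c div 10)) = g"
  using mod10_cases[of c] dc0 dc1 dc2 dc3 dc4 dc5 dc6 dc7 dc8 dc9 by fastforce
lemma di9: "decode c = Mu f \<Longrightarrow> c mod 10 = 9 \<and> decode (c div 10) = f"
  using mod10_cases[of c] dc0 dc1 dc2 dc3 dc4 dc5 dc6 dc7 dc8 dc9 by fastforce


definition sem :: "nat \<Rightarrow> bool" where
  "sem x \<longleftrightarrow> (if p1 x = 0 then ev (orcl (fa x)) (decode (fb x)) (fc x) (fd x)
    else if p1 x = 1 then (\<forall>j<fd x. \<exists>v. v \<noteq> 0 \<and> ev (orcl (fa x)) (decode (fb x)) (pe2 j (fc x)) v)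
    else if p1 x = 2 then (\<forall>x' y. tab (fa x) x' = Some y \<longrightarrow> pe2 (pe2 x' y) 1 < fd x \<longrightarrow> ev (orcl (fb x)) (decode (fc x)) x' y)
    else if p1 x = 3 then mem (fa x) (tab (fe x))
    else if p1 x = 4 then mem (fb x) (Phi (fa x) (sigY (ff x)))
    else False)"

lemma sem_ev: "sem (evf a c i ou) \<longleftrightarrow> ev (orcl a) (decode c) i ou" by (simp add: sem_def)
lemma sem_mu: "sem (muf a c i k) \<longleftrightarrow> (\<forall>j<k. \<exists>v. v \<noteq> 0 \<and> ev (orcl a) (decode c) (pe2 j i) v)" by (simp add: sem_def)
lemma sem_sub: "sem (subf t a c k) \<longleftrightarrow> (\<forall>x' y. tab t x' = Some y \<longrightarrow> pe2 (pe2 x' y) 1 < k \<longrightarrow> ev (orcl a) (decode c) x' y)" by (simp add: sem_def)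
lemma sem_mem: "sem (memf m t) \<longleftrightarrow> mem m (tab t)" by (simp add: sem_def)
lemma sem_top: "sem (topf e m u) \<longleftrightarrow> mem m (Phi e (sigY u))" by (simp add: sem_def)

lemmas sem_simps = sem_ev sem_mu sem_sub sem_mem sem_top sem_mu[simplified] sem_sub[simplified] sem_mem[simplified] sem_top[simplified]

lemma bit_lt: "bit (n::nat) k \<Longrightarrow> k < n"
proof -
  assume "bit n k"
  then have "odd (n div 2 ^ k)" by (simp add: bit_iff_odd)
  then have "0 < n div 2 ^ k" by (cases "n div 2 ^ k") auto
  then have "2 ^ k \<le> n" by (simp add: div_greater_zero_iff)
  moreover have "k < 2 ^ k" by (rule less_exp)
  ultimately show ?thesis by linarith
qed

lemma sound_ev:
  assumes d: "Dr (evf a c i ou) w"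
    and s1: "P1r (evf a c i ou) w \<noteq> 0 \<Longrightarrow> sem (P1r (evf a c i ou) w - 1)"
    and s2: "P2r (evf a c i ou) w \<noteq> 0 \<Longrightarrow> sem (P2r (evf a c i ou) w - 1)"
  shows "ev (orcl a) (decode c) i ou"
proof -
  let ?c1 = "p1 (c div 10)" and ?c2 = "p2 (c div 10)"
  from mod10_cases[of c] show ?thesis
  proof (elim disjE)
    assume h: "c mod 10 = 0"
    with d have "ou = 0" by (simp add: Dr_def)
    then show ?thesis by (simp add: dc0[OF h] ev_Zero)
  next
    assume h: "c mod 10 = 1"
    with d have "ou = Suc i" by (simp add: Dr_def)
    then show ?thesis by (simp add: dc1[OF h] ev_Succ)
  next
    assume h: "c mod 10 = 2"
    with d have "ou = i" by (simp add: Dr_def)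
    then show ?thesis by (simp add: dc2[OF h] ev_Ident)
  next
    assume h: "c mod 10 = 3"
    with d have "ou = p1 i" by (simp add: Dr_def)
    then show ?thesis by (simp add: dc3[OF h] ev_Fst)
  next
    assume h: "c mod 10 = 4"
    with d have "ou = p2 i" by (simp add: Dr_def)
    then show ?thesis by (simp add: dc4[OF h] ev_Snd)
  next
    assume h: "c mod 10 = 5"
    with d have "Orel a i ou" by (simp add: Dr_def)
    then have "orcl a i = Some ou" by (simp add: orcl_Some)
    then show ?thesis by (simp add: dc5[OF h] ev.ev_query)
  next
    assume h: "c mod 10 = 6"
    have e1: "P1r (evf a c i ou) w = Suc (evf a ?c1 i (p1 ou))" using h by (simp add: P1r_def)
    have e2: "P2r (evf a c i ou) w = Suc (evf a ?c2 i (p2 ou))" using h by (simp add: P2r_def)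
    from s1 s2 have "ev (orcl a) (decode ?c1) i (p1 ou)" "ev (orcl a) (decode ?c2) i (p2 ou)"
      unfolding e1 e2 by (simp_all add: sem_ev)
    then have "ev (orcl a) (PairP (decode ?c1) (decode ?c2)) i (pe2 (p1 ou) (p2 ou))" by (rule ev.ev_pair)
    then show ?thesis by (simp add: dc6[OF h])
  next
    assume h: "c mod 10 = 7"
    have e1: "P1r (evf a c i ou) w = Suc (evf a ?c2 i w)" using h by (simp add: P1r_def)
    have e2: "P2r (evf a c i ou) w = Suc (evf a ?c1 w ou)" using h by (simp add: P2r_def)
    from s1 s2 have "ev (orcl a) (decode ?c2) i w" "ev (orcl a) (decode ?c1) w ou"
      unfolding e1 e2 by (simp_all add: sem_ev)
    then have "ev (orcl a) (Comp (decode ?c1) (decode ?c2)) i ou" by (intro ev.ev_comp)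
    then show ?thesis by (simp add: dc7[OF h])
  next
    assume h: "c mod 10 = 8"
    show ?thesis
    proof (cases "p1 i = 0")
      case True
      have e1: "P1r (evf a c i ou) w = Suc (evf a ?c1 (p2 i) ou)" using h True by (simp add: P1r_def)
      from s1 have "ev (orcl a) (decode ?c1) (p2 i) ou" unfolding e1 by (simp add: sem_ev)
      then have "ev (orcl a) (Prec (decode ?c1) (decode ?c2)) (pe2 0 (p2 i)) ou" by (rule ev.ev_prec0)
      moreover have "pe2 0 (p2 i) = i" using True by (metis prod.collapse prod_decode_inverse)
      ultimately show ?thesis by (simp add: dc8[OF h])
    next
      case False
      then obtain n where n: "p1 i = Suc n" by (cases "p1 i") auto
      have e1: "P1r (evf a c i ou) w = Suc (evf a c (pe2 n (p2 i)) w)" using h n by (simp add: P1r_def)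
      have e2: "P2r (evf a c i ou) w = Suc (evf a ?c2 (pe2 n (pe2 w (p2 i))) ou)" using h n by (simp add: P2r_def)
      from s1 s2 have "ev (orcl a) (Prec (decode ?c1) (decode ?c2)) (pe2 n (p2 i)) w"
          "ev (orcl a) (decode ?c2) (pe2 n (pe2 w (p2 i))) ou"
        unfolding e1 e2 by (simp_all add: sem_ev dc8[OF h])
      then have "ev (orcl a) (Prec (decode ?c1) (decode ?c2)) (pe2 (Suc n) (p2 i)) ou" by (rule ev.ev_precS)
      moreover have "pe2 (Suc n) (p2 i) = i" using n by (metis prod.collapse prod_decode_inverse)
      ultimately show ?thesis by (simp add: dc8[OF h])
    qed
  next
    assume h: "c mod 10 = 9"
    have e1: "P1r (evf a c i ou) w = Suc (evf a (c div 10) (pe2 ou i) 0)" using h by (simp add: P1r_def)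
    have e2: "P2r (evf a c i ou) w = Suc (muf a (c div 10) i ou)" using h by (simp add: P2r_def)
    from s1 s2 have "ev (orcl a) (decode (c div 10)) (pe2 ou i) 0"
        "\<forall>j<ou. \<exists>v. v \<noteq> 0 \<and> ev (orcl a) (decode (c div 10)) (pe2 j i) v"
      unfolding e1 e2 by (simp_all add: sem_simps)
    then have "ev (orcl a) (Mu (decode (c div 10))) i ou" by (rule ev.ev_mu)
    then show ?thesis by (simp add: dc9[OF h])
  qed
qed


lemma sound_mu:
  assumes d: "Dr (muf a c i k) w"
    and s1: "P1r (muf a c i k) w \<noteq> 0 \<Longrightarrow> sem (P1r (muf a c i k) w - 1)"
    and s2: "P2r (muf a c i k) w \<noteq> 0 \<Longrightarrow> sem (P2r (muf a c i k) w - 1)"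
  shows "\<forall>j<k. \<exists>v. v \<noteq> 0 \<and> ev (orcl a) (decode c) (pe2 j i) v"
proof (cases k)
  case 0 then show ?thesis by simp
next
  case (Suc k')
  have w: "w \<noteq> 0" using d Suc by (simp add: Dr_def)
  have e1: "P1r (muf a c i k) w = Suc (muf a c i k')" using Suc by (simp add: P1r_def)
  have e2: "P2r (muf a c i k) w = Suc (evf a c (pe2 k' i) w)" using Suc by (simp add: P2r_def)
  from s1 s2 have h: "\<forall>j<k'. \<exists>v. v \<noteq> 0 \<and> ev (orcl a) (decode c) (pe2 j i) v" "ev (orcl a) (decode c) (pe2 k' i) w"
    unfolding e1 e2 by (simp_all add: sem_simps)
  show ?thesis
  proof (intro allI impI)
    fix j assume "j < k"
    then have "j < k' \<or> j = k'" using Suc by auto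
    then show "\<exists>v. v \<noteq> 0 \<and> ev (orcl a) (decode c) (pe2 j i) v" using h w by blast
  qed
qed

lemma tab_code_lt: "tab t x = Some y \<Longrightarrow> pe2 (pe2 x y) 1 < t"
  by (simp add: tab_Some bit_lt)

lemma sound_sub:
  assumes d: "Dr (subf t a c k) w"
    and s1: "P1r (subf t a c k) w \<noteq> 0 \<Longrightarrow> sem (P1r (subf t a c k) w - 1)"
    and s2: "P2r (subf t a c k) w \<noteq> 0 \<Longrightarrow> sem (P2r (subf t a c k) w - 1)"
  shows "\<forall>x' y. tab t x' = Some y \<longrightarrow> pe2 (pe2 x' y) 1 < k \<longrightarrow> ev (orcl a) (decode c) x' y"
proof (cases k)
  case 0 then show ?thesis by simp
next
  case (Suc k')
  have e1: "P1r (subf t a c k) w = Suc (subf t a c k')" using Suc by (simp add: P1r_def)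
  from s1 have h1: "\<forall>x' y. tab t x' = Some y \<longrightarrow> pe2 (pe2 x' y) 1 < k' \<longrightarrow> ev (orcl a) (decode c) x' y"
    unfolding e1 by (simp add: sem_simps)
  show ?thesis
  proof (intro allI impI)
    fix x' y assume t: "tab t x' = Some y" and lt: "pe2 (pe2 x' y) 1 < k"
    show "ev (orcl a) (decode c) x' y"
    proof (cases "pe2 (pe2 x' y) 1 < k'")
      case True then show ?thesis using h1 t by blast
    next
      case False
      then have kk: "k' = pe2 (pe2 x' y) 1" using lt Suc by simp
      have "tabrel t x' y" using t by (simp add: tab_tabrel)
      then have e2: "P2r (subf t a c k) w = Suc (evf a c x' y)" using Suc kk by (simp add: P2r_def)
      from s2 show ?thesis unfolding e2 by (simp add: sem_simps)
    qed
  qed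
qed

lemma sound_mem:
  assumes d: "Dr (memf m t) w"
    and s1: "P1r (memf m t) w \<noteq> 0 \<Longrightarrow> sem (P1r (memf m t) w - 1)"
    and s2: "P2r (memf m t) w \<noteq> 0 \<Longrightarrow> sem (P2r (memf m t) w - 1)"
  shows "mem m (tab t)"
proof (cases "p2 m = 1")
  case True
  with d have "tabrel t (p1 (p1 m)) (p2 (p1 m))" by (simp add: Dr_def)
  then have "tab t (p1 (p1 m)) = Some (p2 (p1 m))" by (simp add: tab_tabrel)
  then show ?thesis using True by (subst mem.simps) simp
next
  case False
  let ?u = "p2 m" and ?t' = "p1 w" and ?c = "p2 w"
  from d False have h: "m \<noteq> 0" "\<not> bit ?u 0" "tabrel t 0 ?c" by (simp_all add: Dr_def)
  have e1: "P1r (memf m t) w = Suc (subf ?t' (pe2 1 (pe2 t ?u)) ?c ?t')" using False by (simp add: P1r_def)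
  have e2: "P2r (memf m t) w = Suc (memf (p1 m) ?t')" using False by (simp add: P2r_def)
  from s1 have h1: "\<forall>x' y. tab ?t' x' = Some y \<longrightarrow> pe2 (pe2 x' y) 1 < ?t' \<longrightarrow> ev (pjoin (tab t) (tab ?u)) (decode ?c) x' y"
    unfolding e1 by (simp add: sem_simps orcl_1 orcl_1[simplified])
  from s2 have h2: "mem (p1 m) (tab ?t')" unfolding e2 by (simp add: sem_simps)
  have t0: "tab t 0 = Some ?c" using h(3) by (simp add: tab_tabrel)
  have "tab ?t' \<subseteq>\<^sub>m Bapp (tab t) (tab ?u)"
  proof (rule map_le_SomeI)
    fix x' y assume a: "tab ?t' x' = Some y"
    then have "ev (pjoin (tab t) (tab ?u)) (decode ?c) x' y" using h1 tab_code_lt by blast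
    then show "Bapp (tab t) (tab ?u) x' = Some y" using t0 by (simp add: Bapp_Some)
  qed
  with h2 have "mem (p1 m) (Bapp (tab t) (tab ?u))" by (rule mem_mono)
  then show ?thesis using False h(1,2) by (subst mem.simps) simp
qed

lemma Phi_mono: "orc \<subseteq>\<^sub>m orc' \<Longrightarrow> Phi e orc \<subseteq>\<^sub>m Phi e orc'"
  by (rule map_le_SomeI) (auto simp: Phi_Some intro: ev_mono)

lemma sound_top:
  assumes d: "Dr (topf e m u) w"
    and s1: "P1r (topf e m u) w \<noteq> 0 \<Longrightarrow> sem (P1r (topf e m u) w - 1)"
    and s2: "P2r (topf e m u) w \<noteq> 0 \<Longrightarrow> sem (P2r (topf e m u) w - 1)"
  shows "mem m (Phi e (sigY u))"
proof -
  have e1: "P1r (topf e m u) w = Suc (subf w (pe2 0 u) e w)" by (simp add: P1r_def)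
  have e2: "P2r (topf e m u) w = Suc (memf m w)" by (simp add: P2r_def)
  from s1 have h1: "\<forall>x' y. tab w x' = Some y \<longrightarrow> pe2 (pe2 x' y) 1 < w \<longrightarrow> ev (sigY u) (decode e) x' y"
    unfolding e1 by (simp add: sem_simps orcl_0)
  from s2 have h2: "mem m (tab w)" unfolding e2 by (simp add: sem_simps)
  have "tab w \<subseteq>\<^sub>m Phi e (sigY u)"
  proof (rule map_le_SomeI)
    fix x' y assume a: "tab w x' = Some y"
    then have "ev (sigY u) (decode e) x' y" using h1 tab_code_lt by blast
    then show "Phi e (sigY u) x' = Some y" by (simp add: Phi_Some)
  qed
  with h2 show ?thesis by (rule mem_mono)
qed

lemma sound: "x \<in> G \<Longrightarrow> sem x"
proof (induction rule: gclos.induct)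
  case (gI x w)
  have S1: "P1r x w \<noteq> 0 \<Longrightarrow> sem (P1r x w - 1)" using gI.IH(1) by auto
  have S2: "P2r x w \<noteq> 0 \<Longrightarrow> sem (P2r x w - 1)" using gI.IH(2) by auto
  have px: "x = pe2 (p1 x) (p2 x)" by simp
  have q1: "p2 x = pe2 (fa x) (pe2 (fb x) (pe2 (fc x) (fd x)))" by simp
  have q2: "p2 x = pe2 (fa x) (fe x)" by simp
  have q3: "p2 x = pe2 (fa x) (pe2 (fb x) (ff x))" by simp
  consider "p1 x = 0" | "p1 x = 1" | "p1 x = 2" | "p1 x = 3" | "p1 x = 4" | "p1 x > 4" by linarith
  then show ?case
  proof cases
    case 1
    then have x: "x = evf (fa x) (fb x) (fc x) (fd x)" using px q1 by metis
    have "ev (orcl (fa x)) (decode (fb x)) (fc x) (fd x)"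
      by (rule sound_ev[of "fa x" "fb x" "fc x" "fd x" w]) (unfold x[symmetric], insert gI.hyps S1 S2, blast)+
    then show ?thesis using 1 by (simp add: sem_def)
  next
    case 2
    then have x: "x = muf (fa x) (fb x) (fc x) (fd x)" using px q1 by metis
    have "\<forall>j<fd x. \<exists>v. v \<noteq> 0 \<and> ev (orcl (fa x)) (decode (fb x)) (pe2 j (fc x)) v"
      by (rule sound_mu[of "fa x" "fb x" "fc x" "fd x" w]) (unfold x[symmetric], insert gI.hyps S1 S2, blast)+
    then show ?thesis using 2 by (simp add: sem_def)
  next
    case 3
    then have x: "x = subf (fa x) (fb x) (fc x) (fd x)" using px q1 by metis
    have "\<forall>x' y. tab (fa x) x' = Some y \<longrightarrow> pe2 (pe2 x' y) 1 < fd x \<longrightarrow> ev (orcl (fb x)) (decode (fc x)) x' y"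
      by (rule sound_sub[of "fa x" "fb x" "fc x" "fd x" w]) (unfold x[symmetric], insert gI.hyps S1 S2, blast)+
    then show ?thesis using 3 by (simp add: sem_def)
  next
    case 4
    then have x: "x = memf (fa x) (fe x)" using px q2 by metis
    have "mem (fa x) (tab (fe x))"
      by (rule sound_mem[of "fa x" "fe x" w]) (unfold x[symmetric], insert gI.hyps S1 S2, blast)+
    then show ?thesis using 4 by (simp add: sem_def)
  next
    case 5
    then have x: "x = topf (fa x) (fb x) (ff x)" using px q3 by metis
    have "mem (fb x) (Phi (fa x) (sigY (ff x)))"
      by (rule sound_top[of "fa x" "fb x" "ff x" w]) (unfold x[symmetric], insert gI.hyps S1 S2, blast)+
    then show ?thesis using 5 by (simp add: sem_def)
  next
    case 6
    with gI.hyps show ?thesis by (simp add: Dr_def)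
  qed
qed


definition GG :: "nat set" where "GG = gclos Dr P1r P2r"

lemma gI': "Dr x w \<Longrightarrow> (P1r x w = 0 \<or> P1r x w - 1 \<in> GG) \<Longrightarrow> (P2r x w = 0 \<or> P2r x w - 1 \<in> GG) \<Longrightarrow> x \<in> GG"
  unfolding GG_def by (rule gI)

lemma sound': "x \<in> GG \<Longrightarrow> sem x"
  unfolding GG_def by (rule sound)

lemma mu_complete: "(\<forall>j<k. \<exists>v. v \<noteq> 0 \<and> evf a c (pe2 j i) v \<in> GG) \<Longrightarrow> muf a c i k \<in> GG"
proof (induction k)
  case 0 show ?case by (rule gI'[where w=0]) (simp_all add: Dr_def P1r_def P2r_def)
next
  case (Suc k)
  then obtain v where v: "v \<noteq> 0" "evf a c (pe2 k i) v \<in> GG" by blast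
  have ih: "muf a c i k \<in> GG" using Suc by auto
  show ?case by (rule gI'[where w=v]) (use v ih in \<open>simp_all add: Dr_def P1r_def P2r_def\<close>)
qed

lemma ev_complete: "ev orc p i ou \<Longrightarrow> orc = orcl a \<Longrightarrow> decode c = p \<Longrightarrow> evf a c i ou \<in> GG"
proof (induction arbitrary: c rule: ev.induct)
  case (ev_zero x)
  then have h: "c mod 10 = 0" by (intro di0)
  show ?case by (rule gI'[where w=0]) (simp_all add: Dr_def P1r_def P2r_def h)
next
  case (ev_succ x)
  then have h: "c mod 10 = 1" by (intro di1)
  show ?case by (rule gI'[where w=0]) (simp_all add: Dr_def P1r_def P2r_def h)
next
  case (ev_ident x)
  then have h: "c mod 10 = 2" by (intro di2)
  show ?case by (rule gI'[where w=0]) (simp_all add: Dr_def P1r_def P2r_def h)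
next
  case (ev_fst x)
  then have h: "c mod 10 = 3" by (intro di3)
  show ?case by (rule gI'[where w=0]) (simp_all add: Dr_def P1r_def P2r_def h)
next
  case (ev_snd x)
  then have h: "c mod 10 = 4" by (intro di4)
  show ?case by (rule gI'[where w=0]) (simp_all add: Dr_def P1r_def P2r_def h)
next
  case (ev_query x v)
  then have h: "c mod 10 = 5" by (intro di5)
  have "Orel a x v" using ev_query by (simp add: orcl_Some[symmetric])
  then show ?case by (intro gI'[where w=0]) (simp_all add: Dr_def P1r_def P2r_def h)
next
  case (ev_pair f x a1 g b1)
  from di6[OF ev_pair.prems(2)] have h: "c mod 10 = 6" "decode (p1 (c div 10)) = f" "decode (p2 (c div 10)) = g" by auto
  have i1: "evf a (p1 (c div 10)) x a1 \<in> GG" using ev_pair.IH(1) ev_pair.prems(1) h(2) by blast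
  have i2: "evf a (p2 (c div 10)) x b1 \<in> GG" using ev_pair.IH(2) ev_pair.prems(1) h(3) by blast
  show ?case by (rule gI'[where w=0]) (use i1 i2 in \<open>simp_all add: Dr_def P1r_def P2r_def h(1)\<close>)
next
  case (ev_comp g x y f z)
  from di7[OF ev_comp.prems(2)] have h: "c mod 10 = 7" "decode (p1 (c div 10)) = f" "decode (p2 (c div 10)) = g" by auto
  have i1: "evf a (p2 (c div 10)) x y \<in> GG" using ev_comp.IH(1) ev_comp.prems(1) h(3) by blast
  have i2: "evf a (p1 (c div 10)) y z \<in> GG" using ev_comp.IH(2) ev_comp.prems(1) h(2) by blast
  show ?case by (rule gI'[where w=y]) (use i1 i2 in \<open>simp_all add: Dr_def P1r_def P2r_def h(1)\<close>)
next
  case (ev_prec0 f y v g)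
  from di8[OF ev_prec0.prems(2)] have h: "c mod 10 = 8" "decode (p1 (c div 10)) = f" "decode (p2 (c div 10)) = g" by auto
  have i1: "evf a (p1 (c div 10)) y v \<in> GG" using ev_prec0.IH ev_prec0.prems(1) h(2) by blast
  show ?case by (rule gI'[where w=0]) (use i1 in \<open>simp_all add: Dr_def P1r_def P2r_def h(1)\<close>)
next
  case (ev_precS f g n y v w')
  from di8[OF ev_precS.prems(2)] have h: "c mod 10 = 8" "decode (p1 (c div 10)) = f" "decode (p2 (c div 10)) = g" by auto
  have i1: "evf a c (pe2 n y) v \<in> GG" using ev_precS.IH(1) ev_precS.prems by blast
  have i2: "evf a (p2 (c div 10)) (pe2 n (pe2 v y)) w' \<in> GG" using ev_precS.IH(2) ev_precS.prems(1) h(3) by blast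
  show ?case by (rule gI'[where w=v]) (use i1 i2 in \<open>simp_all add: Dr_def P1r_def P2r_def h(1)\<close>)
next
  case (ev_mu f y x)
  from di9[OF ev_mu.prems(2)] have h: "c mod 10 = 9" "decode (c div 10) = f" by auto
  have i1: "evf a (c div 10) (pe2 y x) 0 \<in> GG" using ev_mu.IH(1) ev_mu.prems(1) h(2) by blast
  have "\<forall>j<y. \<exists>v. v \<noteq> 0 \<and> evf a (c div 10) (pe2 j x) v \<in> GG"
  proof (intro allI impI)
    fix j assume "j < y"
    from ev_mu.IH(2)[rule_format, OF \<open>j < y\<close>] obtain v where v: "v \<noteq> 0"
      "orc = orcl a \<longrightarrow> (\<forall>xa. decode xa = f \<longrightarrow> evf a xa (pe2 j x) v \<in> GG)" by blast
    then have "evf a (c div 10) (pe2 j x) v \<in> GG" using ev_mu.prems(1) h(2) by blast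
    then show "\<exists>v. v \<noteq> 0 \<and> evf a (c div 10) (pe2 j x) v \<in> GG" using v(1) by blast
  qed
  then have i2: "muf a (c div 10) x y \<in> GG" by (rule mu_complete)
  show ?case by (rule gI'[where w=0]) (use i1 i2 in \<open>simp_all add: Dr_def P1r_def P2r_def h(1)\<close>)
qed


lemma sub_complete: "(\<forall>x' y. tab t x' = Some y \<longrightarrow> pe2 (pe2 x' y) 1 < k \<longrightarrow> evf a c x' y \<in> GG) \<Longrightarrow> subf t a c k \<in> GG"
proof (induction k)
  case 0 show ?case by (rule gI'[where w=0]) (simp_all add: Dr_def P1r_def P2r_def)
next
  case (Suc k)
  have ih: "subf t a c k \<in> GG" using Suc.prems by (intro Suc.IH) auto
  show ?case
  proof (rule gI'[where w=0])
    show "Dr (subf t a c (Suc k)) 0" by (simp add: Dr_def)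
    show "P1r (subf t a c (Suc k)) 0 = 0 \<or> P1r (subf t a c (Suc k)) 0 - 1 \<in> GG" using ih by (simp add: P1r_def)
    show "P2r (subf t a c (Suc k)) 0 = 0 \<or> P2r (subf t a c (Suc k)) 0 - 1 \<in> GG"
    proof (cases "p2 k = 1 \<and> tabrel t (p1 (p1 k)) (p2 (p1 k))")
      case True
      have kk: "k = pe2 (pe2 (p1 (p1 k)) (p2 (p1 k))) 1" using True by (metis prod.collapse prod_decode_inverse)
      have tt: "tab t (p1 (p1 k)) = Some (p2 (p1 k))" using True by (simp add: tab_tabrel)
      have "evf a c (p1 (p1 k)) (p2 (p1 k)) \<in> GG"
        using Suc.prems tt kk by (metis lessI)
      then show ?thesis using True by (simp add: P2r_def)
    next
      case False
      then show ?thesis by (auto simp: P2r_def)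
    qed
  qed
qed

lemma mem_complete: "mem m (tab t) \<Longrightarrow> memf m t \<in> GG"
proof (induction m arbitrary: t rule: less_induct)
  case (less m t)
  show ?case
  proof (cases "p2 m = 1")
    case True
    then have "tab t (p1 (p1 m)) = Some (p2 (p1 m))" using less.prems by (subst (asm) mem.simps) simp
    then have "tabrel t (p1 (p1 m)) (p2 (p1 m))" by (simp add: tab_tabrel)
    then show ?thesis using True by (intro gI'[where w=0]) (simp_all add: Dr_def P1r_def P2r_def)
  next
    case False
    let ?n = "p1 m" and ?u = "p2 m"
    from less.prems False have h: "m \<noteq> 0" "\<not> bit ?u 0" "mem ?n (Bapp (tab t) (tab ?u))"
      by (subst (asm) mem.simps; simp split: if_splits)+
    obtain c where c: "tab t 0 = Some c"
    proof (cases "tab t 0")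
      case None
      then have "Bapp (tab t) (tab ?u) = (\<lambda>_. None)" by (intro ext) (simp add: Bapp_def)
      with h(3) mem_empty show ?thesis by metis
    next
      case (Some c) then show ?thesis by (rule that)
    qed
    from mem_cont[OF h(3)] obtain D where D: "finite D" "mem ?n ((Bapp (tab t) (tab ?u)) |` D)" by blast
    have "finite (dom ((Bapp (tab t) (tab ?u)) |` D))" using D(1) by (simp add: finite_subset)
    from tab_exists[OF this] obtain t' where t': "tab t' = (Bapp (tab t) (tab ?u)) |` D" by blast
    have m1: "mem ?n (tab t')" using D(2) t' by simp
    have "?n < m" using h(1) by (rule fst_pd_less)
    then have i2: "memf ?n t' \<in> GG" using less.IH m1 by blast
    have i1: "subf t' (pe2 1 (pe2 t ?u)) c t' \<in> GG"
    proof (rule sub_complete, intro allI impI)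
      fix x' y assume a: "tab t' x' = Some y"
      then have "Bapp (tab t) (tab ?u) x' = Some y" using t' by (auto simp: restrict_map_def split: if_splits)
      then have "ev (pjoin (tab t) (tab ?u)) (decode c) x' y" using c by (auto simp: Bapp_Some)
      then show "evf (pe2 1 (pe2 t ?u)) c x' y \<in> GG" by (rule ev_complete) (simp_all add: orcl_1 orcl_1[simplified])
    qed
    have tr: "tabrel t 0 c" using c by (simp add: tab_tabrel)
    show ?thesis
    proof (rule gI'[where w="pe2 t' c"])
      show "Dr (memf m t) (pe2 t' c)" using False h(1,2) tr by (simp add: Dr_def)
      show "P1r (memf m t) (pe2 t' c) = 0 \<or> P1r (memf m t) (pe2 t' c) - 1 \<in> GG"
        using False i1 by (simp add: P1r_def)
      show "P2r (memf m t) (pe2 t' c) = 0 \<or> P2r (memf m t) (pe2 t' c) - 1 \<in> GG"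
        using False i2 by (simp add: P2r_def)
    qed
  qed
qed

lemma top_complete: "mem m (Phi e (sigY u)) \<Longrightarrow> topf e m u \<in> GG"
proof -
  assume a: "mem m (Phi e (sigY u))"
  from mem_cont[OF a] obtain D where D: "finite D" "mem m ((Phi e (sigY u)) |` D)" by blast
  have "finite (dom ((Phi e (sigY u)) |` D))" using D(1) by (simp add: finite_subset)
  from tab_exists[OF this] obtain w where w: "tab w = (Phi e (sigY u)) |` D" by blast
  have "mem m (tab w)" using D(2) w by simp
  then have i2: "memf m w \<in> GG" by (rule mem_complete)
  have i1: "subf w (pe2 0 u) e w \<in> GG"
  proof (rule sub_complete, intro allI impI)
    fix x' y assume "tab w x' = Some y"
    then have "Phi e (sigY u) x' = Some y" using w by (auto simp: restrict_map_def split: if_splits)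
    then have "ev (sigY u) (decode e) x' y" by (simp add: Phi_Some)
    then show "evf (pe2 0 u) e x' y \<in> GG" by (rule ev_complete) (simp_all add: orcl_0)
  qed
  show ?thesis
  proof (rule gI'[where w=w])
    show "Dr (topf e m u) w" by (simp add: Dr_def)
    show "P1r (topf e m u) w = 0 \<or> P1r (topf e m u) w - 1 \<in> GG" using i1 by (simp add: P1r_def)
    show "P2r (topf e m u) w = 0 \<or> P2r (topf e m u) w - 1 \<in> GG" using i2 by (simp add: P2r_def)
  qed
qed

lemma top_iff: "topf e m u \<in> GG \<longleftrightarrow> mem m (Phi e (sigY u))"
  using sound' top_complete sem_top by blast

lemma A_ce: "ce {n. mem (p1 n) (Phi e (sigY (p2 n)))}"
proof -
  have "cfun (\<lambda>n. topf e (p1 n) (p2 n))" by (intro cf_intros)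
  from gclos_ce[OF cD c1 c2 this] have "ce {n. topf e (p1 n) (p2 n) \<in> GG}" unfolding GG_def .
  then show ?thesis unfolding top_iff .
qed


lemma sjoin_even: "2 * x \<in> sjoin X (- X) \<longleftrightarrow> x \<in> X"
proof -
  have "2 * x \<noteq> 2 * n + 1" for n :: nat by presburger
  then show ?thesis unfolding sjoin_def by auto
qed

lemma sjoin_odd: "2 * x + 1 \<in> sjoin X (- X) \<longleftrightarrow> x \<notin> X"
proof -
  have "2 * x + 1 \<noteq> 2 * n" for n :: nat by presburger
  then show ?thesis unfolding sjoin_def by auto
qed

lemma Femb_BX: "Femb (Phi e (charfn X)) = Gapp {n. mem (p1 n) (Phi e (sigY (p2 n)))} (sjoin X (- X))"
proof (rule set_eqI)
  fix m
  let ?Y = "sjoin X (- X)" and ?\<chi> = "charfn X"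
  show "m \<in> Femb (Phi e ?\<chi>) \<longleftrightarrow> m \<in> Gapp {n. mem (p1 n) (Phi e (sigY (p2 n)))} ?Y"
  proof
    assume "m \<in> Femb (Phi e ?\<chi>)"
    then have mm: "mem m (Phi e ?\<chi>)" by (simp add: Femb_def)
    from mem_cont[OF mm] obtain D where D: "finite D" "mem m ((Phi e ?\<chi>) |` D)" by blast
    have "\<forall>x\<in>D. \<exists>Dx. finite Dx \<and> (\<forall>orc'. (\<forall>k\<in>Dx. orc' k = ?\<chi> k) \<longrightarrow> Phi e ?\<chi> x \<noteq> None \<longrightarrow> Phi e orc' x = Phi e ?\<chi> x)"
    proof
      fix x assume "x \<in> D"
      show "\<exists>Dx. finite Dx \<and> (\<forall>orc'. (\<forall>k\<in>Dx. orc' k = ?\<chi> k) \<longrightarrow> Phi e ?\<chi> x \<noteq> None \<longrightarrow> Phi e orc' x = Phi e ?\<chi> x)"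
      proof (cases "Phi e ?\<chi> x")
        case None then show ?thesis by auto
      next
        case (Some y)
        then have "ev ?\<chi> (decode e) x y" by (simp add: Phi_Some)
        from ev_finite_use[OF this] obtain Dx where Dx: "finite Dx" "\<forall>orc'. (\<forall>k\<in>Dx. orc' k = ?\<chi> k) \<longrightarrow> ev orc' (decode e) x y"
          by blast
        show ?thesis
        proof (intro exI[of _ Dx] conjI allI impI)
          show "finite Dx" by fact
          fix orc' assume "\<forall>k\<in>Dx. orc' k = ?\<chi> k"
          then have "ev orc' (decode e) x y" using Dx(2) by blast
          then have "Phi e orc' x = Some y" by (simp only: Phi_Some)
          then show "Phi e orc' x = Phi e ?\<chi> x" using Some by simp
        qed
      qed
    qed
    then obtain Dx where Dx: "\<And>x. x \<in> D \<Longrightarrow> finite (Dx x) \<and> (\<forall>orc'. (\<forall>k\<in>Dx x. orc' k = ?\<chi> k) \<longrightarrow> Phi e ?\<chi> x \<noteq> None \<longrightarrow> Phi e orc' x = Phi e ?\<chi> x)"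
      by metis
    let ?D' = "\<Union>x\<in>D. Dx x"
    have fD': "finite ?D'" using D(1) Dx by auto
    let ?S = "(\<lambda>n. 2 * n) ` (?D' \<inter> X) \<union> (\<lambda>n. 2 * n + 1) ` (?D' - X)"
    have "finite ?S" using fD' by auto
    from set_code[OF this] obtain u :: nat where u: "\<forall>k. bit u k \<longleftrightarrow> k \<in> ?S" by blast
    have agree: "sigY u n = ?\<chi> n" if "n \<in> ?D'" for n
    proof (cases "n \<in> X")
      case True
      then have "bit u (2 * n)" using u that by auto
      then show ?thesis using True by (simp add: sigY_def charfn_def)
    next
      case False
      have "2 * n \<notin> ?S"
      proof
        assume "2 * n \<in> ?S"
        then consider n' where "n' \<in> X" "2 * n = 2 * n'" | n' where "2 * n = 2 * n' + 1" by blast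
        then show False
        proof cases
          case 1 then show False using False by simp
        next
          case 2 then show False by presburger
        qed
      qed
      then have "\<not> bit u (2 * n)" using u by blast
      moreover have "bit u (2 * n + 1)" using u that False by auto
      ultimately show ?thesis using False by (simp add: sigY_def charfn_def)
    qed
    have "(Phi e ?\<chi>) |` D \<subseteq>\<^sub>m Phi e (sigY u)"
    proof (rule map_le_SomeI)
      fix x y assume a: "((Phi e ?\<chi>) |` D) x = Some y"
      then have xD: "x \<in> D" and b: "Phi e ?\<chi> x = Some y" by (auto simp: restrict_map_def split: if_splits)
      have "\<forall>k\<in>Dx x. sigY u k = ?\<chi> k" using xD agree by blast
      with Dx[OF xD] b show "Phi e (sigY u) x = Some y" by auto
    qed
    with D(2) have m1: "mem m (Phi e (sigY u))" by (rule mem_mono)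
    have "Dset u \<subseteq> ?Y"
    proof
      fix k assume "k \<in> Dset u"
      then have "k \<in> ?S" using u by (simp add: Dset_bit)
      then show "k \<in> ?Y" using sjoin_even sjoin_odd by auto
    qed
    then show "m \<in> Gapp {n. mem (p1 n) (Phi e (sigY (p2 n)))} ?Y"
      using m1 unfolding Gapp_def by auto
  next
    assume "m \<in> Gapp {n. mem (p1 n) (Phi e (sigY (p2 n)))} ?Y"
    then obtain u where u: "mem m (Phi e (sigY u))" "Dset u \<subseteq> ?Y" unfolding Gapp_def by auto
    have "sigY u \<subseteq>\<^sub>m ?\<chi>"
    proof (rule map_le_SomeI)
      fix x v assume a: "sigY u x = Some v"
      show "?\<chi> x = Some v"
      proof (cases "bit u (2 * x)")
        case True
        then have "2 * x \<in> ?Y" using u(2) by (auto simp: Dset_bit)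
        then have "x \<in> X" by (simp add: sjoin_even)
        then show ?thesis using a True by (simp add: sigY_def charfn_def)
      next
        case False
        with a have b: "bit u (2 * x + 1)" "v = 0" by (auto simp: sigY_def split: if_splits)
        then have "2 * x + 1 \<in> ?Y" using u(2) by (auto simp: Dset_bit)
        then have "x \<notin> X" using sjoin_odd[of x X] by simp
        then show ?thesis using b by (simp add: charfn_def)
      qed
    qed
    then have "Phi e (sigY u) \<subseteq>\<^sub>m Phi e ?\<chi>" by (rule Phi_mono)
    with u(1) have "mem m (Phi e ?\<chi>)" by (rule mem_mono)
    then show "m \<in> Femb (Phi e ?\<chi>)" by (simp add: Femb_def)
  qed
qed

theorem theorem7p3:
  shows "\<exists>f :: (nat \<Rightarrow> nat option) \<Rightarrow> nat set.
           inj f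
         \<and> (\<forall>\<phi> \<psi>. f (Bapp \<phi> \<psi>) = Gapp (f \<phi>) (f \<psi>))
         \<and> (\<forall>X \<phi>. \<phi> \<in> BX X \<longrightarrow> f \<phi> \<in> GY (sjoin X (- X)))"
proof (intro exI[of _ Femb] conjI allI impI)
  show "inj Femb" by (rule Femb_inj)
  fix \<phi> \<psi> show "Femb (Bapp \<phi> \<psi>) = Gapp (Femb \<phi>) (Femb \<psi>)" by (rule Femb_hom)
next
  fix X \<phi> assume "\<phi> \<in> BX X"
  then obtain e where e: "\<phi> = Phi e (charfn X)" by (auto simp: BX_def)
  have "Gapp {n. mem (p1 n) (Phi e (sigY (p2 n)))} (sjoin X (- X)) \<in> GY (sjoin X (- X))"
    by (intro GY_app GY_ce A_ce GY_base)
  then show "Femb \<phi> \<in> GY (sjoin X (- X))" by (simp add: e Femb_BX)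
qed


end
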